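(* Let $\Omega_x\subset\mathbb{R}$ and $\Omega_y\subset\mathbb{R}$ be bounded domains and $\Omega=\Omega_x\times\Omega_y$. For any measurable functions $r:\Omega_x\to\mathbb{R}$ and $s:\Omega_y\to\mathbb{R}$ such that $r\otimes s\neq 0$, $$ r\otimes s\in H^1_0(\Omega)\iff r\in H^1_0(\Omega_x)\text{ and } s\in H^1_0(\Omega_y).$$
   Context: For functions $r$ on $\Omega_x$ and $s$ on $\Omega_y$, $r\otimes s$ denotes the function on $\Omega$ given by $(r\otimes s)(x,y)=r(x)s(y)$. *)

theory Defs
  imports "HOL-Analysis.Analysis"
begin

definition bounded_domain :: "'a::euclidean_space set \<Rightarrow> bool" where
  "bounded_domain U \<longleftrightarrow> open U \<and> connected U \<and> U \<noteq> {} \<and> bounded U"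

fun iter_pd :: "'a::euclidean_space list \<Rightarrow> ('a \<Rightarrow> real) \<Rightarrow> 'a \<Rightarrow> real" where
  "iter_pd [] f = f"
| "iter_pd (b # bs) f = (\<lambda>x. frechet_derivative (iter_pd bs f) (at x) b)"

definition smooth_fun :: "('a::euclidean_space \<Rightarrow> real) \<Rightarrow> bool" where
  "smooth_fun f \<longleftrightarrow> (\<forall>bs. set bs \<subseteq> Basis \<longrightarrow> (\<forall>x. iter_pd bs f differentiable at x))"

definition test_fun :: "'a::euclidean_space set \<Rightarrow> ('a \<Rightarrow> real) set" where
  "test_fun U = {\<phi>. smooth_fun \<phi> \<and> compact (closure {x. \<phi> x \<noteq> 0}) \<and> closure {x. \<phi> x \<noteq> 0} \<subseteq> U}"

definition pd :: "'a::euclidean_space \<Rightarrow> ('a \<Rightarrow> real) \<Rightarrow> 'a \<Rightarrow> real" where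
  "pd b f = (\<lambda>x. frechet_derivative f (at x) b)"

definition L2 :: "'a::euclidean_space set \<Rightarrow> ('a \<Rightarrow> real) \<Rightarrow> bool" where
  "L2 U f \<longleftrightarrow> f \<in> borel_measurable (lebesgue_on U) \<and> integrable (lebesgue_on U) (\<lambda>x. (f x)\<^sup>2)"

definition weak_pd :: "'a::euclidean_space set \<Rightarrow> 'a \<Rightarrow> ('a \<Rightarrow> real) \<Rightarrow> ('a \<Rightarrow> real) \<Rightarrow> bool" where
  "weak_pd U b u g \<longleftrightarrow> (\<forall>\<phi>\<in>test_fun U.
      integrable (lebesgue_on U) (\<lambda>x. u x * pd b \<phi> x) \<and>
      integrable (lebesgue_on U) (\<lambda>x. g x * \<phi> x) \<and>
      (\<integral>x. u x * pd b \<phi> x \<partial>lebesgue_on U) = - (\<integral>x. g x * \<phi> x \<partial>lebesgue_on U))"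

text \<open>H^1_0(U): the closure of C_c^infinity(U) in the H^1(U) norm; i.e. u is in H^1(U)
  (L2 with L2 weak gradient g) and some sequence of test functions converges to u in H^1.\<close>
definition H10 :: "'a::euclidean_space set \<Rightarrow> ('a \<Rightarrow> real) \<Rightarrow> bool" where
  "H10 U u \<longleftrightarrow> L2 U u \<and>
     (\<exists>g. (\<forall>b\<in>Basis. L2 U (g b) \<and> weak_pd U b u (g b)) \<and>
          (\<exists>\<phi>. (\<forall>n. \<phi> n \<in> test_fun U) \<and>
               (\<lambda>n. \<integral>x. (u x - \<phi> n x)\<^sup>2 \<partial>lebesgue_on U) \<longlonglongrightarrow> 0 \<and>
               (\<forall>b\<in>Basis. (\<lambda>n. \<integral>x. (g b x - pd b (\<phi> n) x)\<^sup>2 \<partial>lebesgue_on U) \<longlonglongrightarrow> 0)))"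

definition tensor :: "(real \<Rightarrow> real) \<Rightarrow> (real \<Rightarrow> real) \<Rightarrow> real \<times> real \<Rightarrow> real" where
  "tensor r s = (\<lambda>(x, y). r x * s y)"

end

theory Submission
  imports Defs
begin

lemma borel_lebesgue_on:
  fixes f :: "'a::euclidean_space \<Rightarrow> real"
  assumes "f \<in> borel_measurable borel"
  shows "f \<in> borel_measurable (lebesgue_on U)"
  using assms by (intro measurable_restrict_space1 measurable_completion) simp

lemma integral_lebesgue_on_borel:
  fixes f :: "'a::euclidean_space \<Rightarrow> real"
  assumes U: "U \<in> sets borel" and f: "f \<in> borel_measurable borel"
  shows "integral\<^sup>L (lebesgue_on U) f = integral\<^sup>L lborel (\<lambda>x. indicator U x * f x)"
proof -
  have "integral\<^sup>L (lebesgue_on U) f = integral\<^sup>L lebesgue (\<lambda>x. indicator U x *\<^sub>R f x)"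
    using U by (intro integral_restrict_space) auto
  also have "\<dots> = integral\<^sup>L lborel (\<lambda>x. indicator U x *\<^sub>R f x)"
    using U f by (intro integral_completion) auto
  finally show ?thesis by simp
qed

lemma integrable_lebesgue_on_borel:
  fixes f :: "'a::euclidean_space \<Rightarrow> real"
  assumes U: "U \<in> sets borel" and f: "f \<in> borel_measurable borel"
  shows "integrable (lebesgue_on U) f \<longleftrightarrow> integrable lborel (\<lambda>x. indicator U x * f x)"
proof -
  have "integrable (lebesgue_on U) f \<longleftrightarrow> integrable lebesgue (\<lambda>x. indicator U x *\<^sub>R f x)"
    using U by (intro integrable_restrict_space) auto
  also have "\<dots> \<longleftrightarrow> integrable lborel (\<lambda>x. indicator U x *\<^sub>R f x)"
    using U f by (intro integrable_completion) auto
  finally show ?thesis by simp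
qed

lemma nn_integral_lebesgue_on_borel:
  fixes f :: "'a::euclidean_space \<Rightarrow> ennreal"
  assumes U: "U \<in> sets borel"
  shows "nn_integral (lebesgue_on U) f = nn_integral lborel (\<lambda>x. f x * indicator U x)"
proof -
  have "nn_integral (lebesgue_on U) f = nn_integral lebesgue (\<lambda>x. f x * indicator U x)"
    using U by (intro nn_integral_restrict_space) auto
  also have "\<dots> = nn_integral lborel (\<lambda>x. f x * indicator U x)"
    by (rule nn_integral_completion)
  finally show ?thesis .
qed

lemma borel_version:
  fixes f :: "'a::euclidean_space \<Rightarrow> real"
  assumes U: "U \<in> sets borel" and f: "f \<in> borel_measurable (lebesgue_on U)"
  shows "\<exists>g\<in>borel_measurable borel. AE x in lebesgue_on U. f x = g x"
proof -
  have "(\<lambda>x. indicator U x *\<^sub>R f x) \<in> borel_measurable lebesgue"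
    using f U by (subst (asm) borel_measurable_restrict_space_iff) auto
  then obtain g where g: "g \<in> borel_measurable lborel" and ae: "AE x in lborel. indicator U x *\<^sub>R f x = g x"
    using completion_ex_borel_measurable_real by blast
  have "AE x in lebesgue. indicator U x *\<^sub>R f x = g x" using ae by (simp add: AE_completion_iff)
  then have "AE x in lebesgue_on U. f x = g x"
    using U by (subst AE_restrict_space_iff) (auto elim!: AE_mp)
  then show ?thesis using g by auto
qed

lemma iter_pd_append: "iter_pd (cs @ bs) f = iter_pd cs (iter_pd bs f)"
  by (induction cs) auto

lemma fd_works: "f differentiable at x \<Longrightarrow> (f has_derivative frechet_derivative f (at x)) (at x)"
  using frechet_derivative_works by blast

lemma real_basis_list: "set bs \<subseteq> (Basis::real set) \<Longrightarrow> bs = replicate (length bs) 1"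
  by (induction bs) auto

lemma slice_has_derivative:
  fixes G :: "'a::euclidean_space \<Rightarrow> real"
  assumes "G differentiable at (p + t *\<^sub>R d)"
  shows "((\<lambda>t. c * G (p + t *\<^sub>R d)) has_derivative
          (\<lambda>h. c * frechet_derivative G (at (p + t *\<^sub>R d)) (h *\<^sub>R d))) (at t)"
proof -
  have e: "((\<lambda>t. p + t *\<^sub>R d) has_derivative (\<lambda>h. h *\<^sub>R d)) (at t)"
    by (auto intro!: derivative_eq_intros)
  have "((\<lambda>t. G (p + t *\<^sub>R d)) has_derivative (\<lambda>h. frechet_derivative G (at (p + t *\<^sub>R d)) (h *\<^sub>R d))) (at t)"
    using diff_chain_at[OF e fd_works[OF assms]] by (simp add: o_def)
  then show ?thesis by (intro has_derivative_mult_right)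
qed

lemma iter_pd_slice:
  fixes \<phi> :: "'a::euclidean_space \<Rightarrow> real"
  assumes "\<And>n x. iter_pd (replicate n d) \<phi> differentiable at x"
  shows "iter_pd (replicate n 1) (\<lambda>t. c * \<phi> (p + t *\<^sub>R d)) = (\<lambda>t. c * iter_pd (replicate n d) \<phi> (p + t *\<^sub>R d))"
proof (induction n)
  case 0
  then show ?case by simp
next
  case (Suc n)
  show ?case
  proof
    fix t
    have dd: "iter_pd (replicate n d) \<phi> differentiable at (p + t *\<^sub>R d)" using assms .
    have "iter_pd (replicate (Suc n) 1) (\<lambda>t. c * \<phi> (p + t *\<^sub>R d)) t
        = frechet_derivative (\<lambda>t. c * iter_pd (replicate n d) \<phi> (p + t *\<^sub>R d)) (at t) 1"
      using Suc by simp
    also have "\<dots> = c * frechet_derivative (iter_pd (replicate n d) \<phi>) (at (p + t *\<^sub>R d)) d"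
      using frechet_derivative_at[OF slice_has_derivative[OF dd, of c], symmetric] by simp
    finally show "iter_pd (replicate (Suc n) 1) (\<lambda>t. c * \<phi> (p + t *\<^sub>R d)) t
        = c * iter_pd (replicate (Suc n) d) \<phi> (p + t *\<^sub>R d)" by simp
  qed
qed

lemma smooth_slice:
  fixes \<phi> :: "'a::euclidean_space \<Rightarrow> real"
  assumes "smooth_fun \<phi>" "d \<in> Basis"
  shows "smooth_fun (\<lambda>t. c * \<phi> (p + t *\<^sub>R d))"
  unfolding smooth_fun_def
proof (intro allI impI)
  fix bs :: "real list" and x
  assume "set bs \<subseteq> Basis"
  then have bs: "bs = replicate (length bs) 1" by (rule real_basis_list)
  have D: "\<And>n x. iter_pd (replicate n d) \<phi> differentiable at x"
  proof -
    fix n x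
    have "set (replicate n d) \<subseteq> Basis" using assms(2) by (auto simp: set_replicate_conv_if)
    then show "iter_pd (replicate n d) \<phi> differentiable at x" using assms(1) unfolding smooth_fun_def by blast
  qed
  show "iter_pd bs (\<lambda>t. c * \<phi> (p + t *\<^sub>R d)) differentiable at x"
    apply (subst bs, subst iter_pd_slice[OF D])
    using slice_has_derivative[OF D] unfolding differentiable_def by blast
qed


lemma tensor_has_derivative:
  assumes "A differentiable at x" "B differentiable at y"
  shows "(tensor A B has_derivative
     (\<lambda>z. frechet_derivative A (at x) (fst z) * B y + A x * frechet_derivative B (at y) (snd z))) (at (x, y))"
proof -
  have t: "tensor A B = (\<lambda>z. A (fst z) * B (snd z))" unfolding tensor_def by auto
  have a: "((\<lambda>z. A (fst z)) has_derivative (\<lambda>z. frechet_derivative A (at x) (fst z))) (at (x, y))"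
    using diff_chain_at[of fst fst "(x,y)" A, OF has_derivative_fst[OF has_derivative_ident]] fd_works[OF assms(1)]
    by (simp add: o_def)
  have b: "((\<lambda>z. B (snd z)) has_derivative (\<lambda>z. frechet_derivative B (at y) (snd z))) (at (x, y))"
    using diff_chain_at[of snd snd "(x,y)" B, OF has_derivative_snd[OF has_derivative_ident]] fd_works[OF assms(2)]
    by (simp add: o_def)
  show ?thesis unfolding t using has_derivative_mult[OF a b] by (simp add: algebra_simps)
qed

definition nx :: "(real \<times> real) list \<Rightarrow> nat" where "nx bs = length (filter (\<lambda>b. b = (1,0)) bs)"
definition ny :: "(real \<times> real) list \<Rightarrow> nat" where "ny bs = length (filter (\<lambda>b. b = (0,1)) bs)"

lemma Basis_real_prod: "(Basis :: (real \<times> real) set) = {(1,0), (0,1)}"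
  by (auto simp: Basis_prod_def)

lemma smooth_rep: "smooth_fun (a::real\<Rightarrow>real) \<Longrightarrow> iter_pd (replicate n 1) a differentiable at x"
  unfolding smooth_fun_def by (auto simp: set_replicate_conv_if)

lemma iter_pd_tensor:
  assumes a: "smooth_fun a" and b: "smooth_fun b" and bs: "set bs \<subseteq> Basis"
  shows "iter_pd bs (tensor a b) = tensor (iter_pd (replicate (nx bs) 1) a) (iter_pd (replicate (ny bs) 1) b)"
  using bs
proof (induction bs)
  case Nil
  then show ?case by (simp add: nx_def ny_def)
next
  case (Cons c bs)
  let ?A = "iter_pd (replicate (nx bs) 1) a" and ?B = "iter_pd (replicate (ny bs) 1) b"
  have IH: "iter_pd bs (tensor a b) = tensor ?A ?B" using Cons by auto
  have c: "c = (1,0) \<or> c = (0,1)" using Cons.prems Basis_real_prod by auto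
  show ?case
  proof
    fix z :: "real \<times> real"
    obtain x y where z: "z = (x,y)" by (cases z)
    have dA: "?A differentiable at x" using smooth_rep[OF a] .
    have dB: "?B differentiable at y" using smooth_rep[OF b] .
    have lA: "linear (frechet_derivative ?A (at x))" using fd_works[OF dA] has_derivative_linear by blast
    have lB: "linear (frechet_derivative ?B (at y))" using fd_works[OF dB] has_derivative_linear by blast
    have "iter_pd (c # bs) (tensor a b) z = frechet_derivative (tensor ?A ?B) (at (x,y)) c"
      using IH z by simp
    also have "\<dots> = frechet_derivative ?A (at x) (fst c) * ?B y + ?A x * frechet_derivative ?B (at y) (snd c)"
      using frechet_derivative_at[OF tensor_has_derivative[OF dA dB], symmetric] by simp
    finally show "iter_pd (c # bs) (tensor a b) z =
       tensor (iter_pd (replicate (nx (c # bs)) 1) a) (iter_pd (replicate (ny (c # bs)) 1) b) z"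
      using c z linear_0[OF lA] linear_0[OF lB] by (auto simp: nx_def ny_def tensor_def)
  qed
qed

lemma smooth_tensor:
  assumes a: "smooth_fun a" and b: "smooth_fun b"
  shows "smooth_fun (tensor a b)"
  unfolding smooth_fun_def
proof (intro allI impI)
  fix bs :: "(real \<times> real) list" and z :: "real \<times> real"
  assume bs: "set bs \<subseteq> Basis"
  obtain x y where z: "z = (x,y)" by (cases z)
  show "iter_pd bs (tensor a b) differentiable at z"
    unfolding iter_pd_tensor[OF a b bs] z
    using tensor_has_derivative[OF smooth_rep[OF a] smooth_rep[OF b]] differentiable_def by blast
qed

lemma pd_tensor:
  assumes a: "smooth_fun a" and b: "smooth_fun b"
  shows "pd (1,0) (tensor a b) = tensor (pd 1 a) b" "pd (0,1) (tensor a b) = tensor a (pd 1 b)"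
proof -
  have "pd (1,0) (tensor a b) = iter_pd [(1,0)] (tensor a b)" by (simp add: pd_def)
  also have "\<dots> = tensor (pd 1 a) b"
    by (subst iter_pd_tensor[OF a b]) (auto simp: Basis_real_prod nx_def ny_def pd_def)
  finally show "pd (1,0) (tensor a b) = tensor (pd 1 a) b" .
  have "pd (0,1) (tensor a b) = iter_pd [(0,1)] (tensor a b)" by (simp add: pd_def)
  also have "\<dots> = tensor a (pd 1 b)"
    by (subst iter_pd_tensor[OF a b]) (auto simp: Basis_real_prod nx_def ny_def pd_def)
  finally show "pd (0,1) (tensor a b) = tensor a (pd 1 b)" .
qed

definition csupp :: "('a::euclidean_space \<Rightarrow> real) \<Rightarrow> 'a set" where
  "csupp \<phi> = closure {x. \<phi> x \<noteq> 0}"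

lemma compact_closed_sub: "compact K \<Longrightarrow> closed T \<Longrightarrow> T \<subseteq> K \<Longrightarrow> compact T"
proof -
  assume a: "compact K" "closed T" "T \<subseteq> K"
  then have "compact (K \<inter> T)" by (intro compact_Int_closed)
  moreover have "K \<inter> T = T" using a(3) by blast
  ultimately show ?thesis by simp
qed

lemma outside_csupp: "x \<notin> csupp \<phi> \<Longrightarrow> \<phi> x = 0"
  unfolding csupp_def using closure_subset[of "{x. \<phi> x \<noteq> 0}"] by auto

lemma pd_outside_csupp:
  assumes "x \<notin> csupp \<phi>"
  shows "pd b \<phi> x = 0"
proof -
  have o: "open (- csupp \<phi>)" unfolding csupp_def by (simp add: open_Compl)
  have "((\<lambda>_. 0::real) has_derivative (\<lambda>_. 0)) (at x)" by simp
  then have "(\<phi> has_derivative (\<lambda>_. 0)) (at x)"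
  proof (rule has_derivative_transform_within_open[OF _ o])
    show "x \<in> - csupp \<phi>" using assms by simp
    show "\<And>y. y \<in> - csupp \<phi> \<Longrightarrow> 0 = \<phi> y" using outside_csupp by (metis ComplD)
  qed
  from frechet_derivative_at[OF this] have "frechet_derivative \<phi> (at x) = (\<lambda>_. 0)" by simp
  then show ?thesis unfolding pd_def by simp
qed

lemma smooth_differentiable: "smooth_fun \<phi> \<Longrightarrow> \<phi> differentiable at x"
proof -
  assume "smooth_fun \<phi>"
  moreover have "set [] \<subseteq> Basis" by simp
  ultimately have "iter_pd [] \<phi> differentiable at x" unfolding smooth_fun_def by blast
  then show ?thesis by simp
qed

lemma smooth_pd_differentiable: "smooth_fun \<phi> \<Longrightarrow> b \<in> Basis \<Longrightarrow> pd b \<phi> differentiable at x"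
proof -
  assume "smooth_fun \<phi>" "b \<in> Basis"
  moreover have "set [b] \<subseteq> Basis" using \<open>b \<in> Basis\<close> by simp
  ultimately have "iter_pd [b] \<phi> differentiable at x" unfolding smooth_fun_def by blast
  then show ?thesis by (simp add: pd_def)
qed

lemma smooth_cont: "smooth_fun \<phi> \<Longrightarrow> continuous_on UNIV \<phi>"
  by (intro continuous_at_imp_continuous_on ballI differentiable_imp_continuous_within smooth_differentiable)

lemma smooth_pd_cont: "smooth_fun \<phi> \<Longrightarrow> b \<in> Basis \<Longrightarrow> continuous_on UNIV (pd b \<phi>)"
  by (intro continuous_at_imp_continuous_on ballI differentiable_imp_continuous_within smooth_pd_differentiable)

lemma cont_csupp_bounded:
  fixes f :: "'a::euclidean_space \<Rightarrow> real"
  assumes "continuous_on UNIV f" "compact K" "\<And>x. x \<notin> K \<Longrightarrow> f x = 0"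
  shows "\<exists>C. \<forall>x. \<bar>f x\<bar> \<le> C"
proof -
  have "continuous_on K f" using assms(1) continuous_on_subset by blast
  then have "compact (f ` K)" using assms(2) by (intro compact_continuous_image)
  then have "bounded (f ` K)" by (rule compact_imp_bounded)
  then obtain C where C: "\<And>y. y \<in> f ` K \<Longrightarrow> norm y \<le> C" unfolding bounded_iff by blast
  have "\<bar>f x\<bar> \<le> max C 0" for x using C[of "f x"] assms(3)[of x] by (cases "x \<in> K") auto
  then show ?thesis by blast
qed

lemma test_fun_props:
  assumes "\<phi> \<in> test_fun U"
  shows "smooth_fun \<phi>" "compact (csupp \<phi>)" "csupp \<phi> \<subseteq> U"
  using assms unfolding test_fun_def csupp_def by auto

lemma test_fun_bounded:
  assumes "\<phi> \<in> test_fun U"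
  shows "\<exists>C. \<forall>x. \<bar>\<phi> x\<bar> \<le> C"
  using cont_csupp_bounded[OF smooth_cont[OF test_fun_props(1)[OF assms]] test_fun_props(2)[OF assms] outside_csupp[of _ \<phi>]] .

lemma test_fun_pd_bounded:
  assumes "\<phi> \<in> test_fun U" "b \<in> Basis"
  shows "\<exists>C. \<forall>x. \<bar>pd b \<phi> x\<bar> \<le> C"
  using cont_csupp_bounded[OF smooth_pd_cont[OF test_fun_props(1)[OF assms(1)] assms(2)]
     test_fun_props(2)[OF assms(1)] pd_outside_csupp[of _ \<phi> b]] .

lemma tensor_test_fun:
  assumes a: "a \<in> test_fun A" and b: "b \<in> test_fun B"
  shows "tensor a b \<in> test_fun (A \<times> B)"
proof -
  have sub: "{z. tensor a b z \<noteq> 0} \<subseteq> csupp a \<times> csupp b"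
    using outside_csupp[of _ a] outside_csupp[of _ b] unfolding tensor_def by fastforce
  have cK: "compact (csupp a \<times> csupp b)" using test_fun_props(2)[OF a] test_fun_props(2)[OF b]
    by (rule compact_Times)
  have cl: "closure {z. tensor a b z \<noteq> 0} \<subseteq> csupp a \<times> csupp b"
    using sub cK by (meson closure_minimal compact_imp_closed)
  show ?thesis unfolding test_fun_def
    using smooth_tensor[OF test_fun_props(1)[OF a] test_fun_props(1)[OF b]] cl
      compact_closed_sub[OF cK closed_closure cl]
      test_fun_props(3)[OF a] test_fun_props(3)[OF b]
    by blast
qed

lemma slice_test_fun:
  fixes \<phi> :: "'a::euclidean_space \<Rightarrow> real" and U :: "real set"
  assumes \<phi>: "\<phi> \<in> test_fun V" and d: "d \<in> Basis"
    and sub: "\<And>t. p + t *\<^sub>R d \<in> V \<Longrightarrow> t \<in> U"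
  shows "(\<lambda>t. c * \<phi> (p + t *\<^sub>R d)) \<in> test_fun U"
proof -
  let ?K = "csupp \<phi>"
  let ?S = "{t. p + t *\<^sub>R d \<in> ?K}"
  have cK: "compact ?K" using test_fun_props(2)[OF \<phi>] .
  have e: "?S = (\<lambda>t. p + t *\<^sub>R d) -` ?K" by auto
  have clS: "closed ?S" unfolding e
    by (rule continuous_closed_vimage) (auto intro!: continuous_intros compact_imp_closed[OF cK])
  obtain R where R: "\<And>z. z \<in> ?K \<Longrightarrow> norm z \<le> R" using cK compact_imp_bounded bounded_iff by metis
  have nd: "norm d = 1" using d by auto
  have "norm t \<le> R + norm p" if "t \<in> ?S" for t
  proof -
    have "norm t = norm ((p + t *\<^sub>R d) - p)" using nd by (simp add: norm_scaleR)
    also have "\<dots> \<le> norm (p + t *\<^sub>R d) + norm p" by (rule norm_triangle_ineq4)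
    also have "\<dots> \<le> R + norm p" using R that by auto
    finally show ?thesis .
  qed
  then have bS: "bounded ?S" unfolding bounded_iff by blast
  have cS: "compact ?S" using clS bS compact_eq_bounded_closed by blast
  have sub1: "{t. c * \<phi> (p + t *\<^sub>R d) \<noteq> 0} \<subseteq> ?S" using outside_csupp[of _ \<phi>] by auto
  have cl: "closure {t. c * \<phi> (p + t *\<^sub>R d) \<noteq> 0} \<subseteq> ?S" using closure_minimal[OF sub1 clS] .
  have "?S \<subseteq> U" using sub test_fun_props(3)[OF \<phi>] by blast
  then show ?thesis unfolding test_fun_def
    using smooth_slice[OF test_fun_props(1)[OF \<phi>] d] cl compact_closed_sub[OF cS closed_closure cl]
    by blast
qed

lemma pd_slice:
  fixes \<phi> :: "'a::euclidean_space \<Rightarrow> real"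
  assumes "smooth_fun \<phi>" "d \<in> Basis"
  shows "pd 1 (\<lambda>t. c * \<phi> (p + t *\<^sub>R d)) = (\<lambda>t. c * pd d \<phi> (p + t *\<^sub>R d))"
proof -
  have D: "\<And>n x. iter_pd (replicate n d) \<phi> differentiable at x"
  proof -
    fix n x
    have "set (replicate n d) \<subseteq> Basis" using assms(2) by (auto simp: set_replicate_conv_if)
    then show "iter_pd (replicate n d) \<phi> differentiable at x" using assms(1) unfolding smooth_fun_def by blast
  qed
  show ?thesis using iter_pd_slice[OF D, of 1 c p] by (simp add: pd_def)
qed

lemma linear_real1: "linear (D::real \<Rightarrow> real) \<Longrightarrow> D h = h * D 1"
  by (metis linear_scale mult.right_neutral real_scaleR_def)

lemma compact_slice:
  fixes K :: "'a::euclidean_space set"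
  assumes cK: "compact K" and d: "d \<in> Basis"
  shows "compact {t. p + t *\<^sub>R d \<in> K}"
proof -
  let ?S = "{t. p + t *\<^sub>R d \<in> K}"
  have e: "?S = (\<lambda>t. p + t *\<^sub>R d) -` K" by auto
  have clS: "closed ?S" unfolding e
    by (rule continuous_closed_vimage) (auto intro!: continuous_intros compact_imp_closed[OF cK])
  have "bounded K" using cK by (rule compact_imp_bounded)
  then obtain R where R: "\<And>z. z \<in> K \<Longrightarrow> norm z \<le> R" unfolding bounded_iff by blast
  have nd: "norm d = 1" using d by auto
  have "norm t \<le> R + norm p" if "t \<in> ?S" for t
  proof -
    have "norm t = norm ((p + t *\<^sub>R d) - p)" using nd by (simp add: norm_scaleR)
    also have "\<dots> \<le> norm (p + t *\<^sub>R d) + norm p" by (rule norm_triangle_ineq4)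
    also have "\<dots> \<le> R + norm p" using R that by auto
    finally show ?thesis .
  qed
  then have bS: "bounded ?S" unfolding bounded_iff by blast
  show "compact ?S" using clS bS compact_eq_bounded_closed by blast
qed

lemma integrable_cont_compact:
  fixes h :: "'a::euclidean_space \<Rightarrow> real"
  assumes "continuous_on UNIV h" "compact K" "\<And>x. x \<notin> K \<Longrightarrow> h x = 0"
  shows "integrable lborel h"
proof -
  have "integrable lborel (\<lambda>x. indicator K x *\<^sub>R h x)"
    using assms by (intro borel_integrable_compact) (auto intro: continuous_on_subset)
  moreover have "(\<lambda>x. indicator K x *\<^sub>R h x) = h"
  proof
    fix x show "indicator K x *\<^sub>R h x = h x" using assms(3)[of x] by (cases "x \<in> K") auto
  qed
  ultimately show ?thesis by simp
qed

lemma zero_outside_pd: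
  assumes K: "closed K" "\<And>x. x \<notin> K \<Longrightarrow> F x = 0" and x: "x \<notin> K"
  shows "pd b F x = 0"
proof -
  have "csupp F \<subseteq> K" unfolding csupp_def using K by (intro closure_minimal) auto
  then show ?thesis using x pd_outside_csupp by blast
qed

lemma ftc_zero:
  fixes f :: "real \<Rightarrow> real"
  assumes d: "\<And>x. f differentiable at x" and c: "continuous_on UNIV (pd 1 f)"
    and K: "compact K" "\<And>x. x \<notin> K \<Longrightarrow> f x = 0"
  shows "integral\<^sup>L lborel (pd 1 f) = 0"
proof -
  have "bounded K" using K(1) by (rule compact_imp_bounded)
  then obtain R where R: "\<And>z. z \<in> K \<Longrightarrow> norm z \<le> R" unfolding bounded_iff by blast
  define a where "a = - \<bar>R\<bar> - 1"
  define b where "b = \<bar>R\<bar> + 1"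
  have aK: "a \<notin> K"
  proof
    assume "a \<in> K" then have "norm a \<le> R" by (rule R)
    then show False unfolding a_def real_norm_def by linarith
  qed
  have bK: "b \<notin> K"
  proof
    assume "b \<in> K" then have "norm b \<le> R" by (rule R)
    then show False unfolding b_def real_norm_def by linarith
  qed
  have sub: "K \<subseteq> {a..b}"
  proof
    fix x assume "x \<in> K" then have "norm x \<le> R" by (rule R)
    then show "x \<in> {a..b}" unfolding a_def b_def by (simp add: abs_le_iff) linarith?
  qed
  have z: "pd 1 f x = 0" if "x \<notin> K" for x
    using zero_outside_pd[OF compact_imp_closed[OF K(1)] K(2) that] .
  have ab: "a \<le> b" unfolding a_def b_def by simp
  have eq: "(\<lambda>x. indicator {a..b} x *\<^sub>R pd 1 f x) = pd 1 f"
  proof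
    fix x show "indicator {a..b} x *\<^sub>R pd 1 f x = pd 1 f x"
    proof (cases "x \<in> {a..b}")
      case True then show ?thesis by simp
    next
      case False then have "x \<notin> K" using sub by blast
      then show ?thesis using z False by simp
    qed
  qed
  have vd: "(f has_vector_derivative pd 1 f x) (at x within {a..b})" for x
  proof -
    have fd: "(f has_derivative frechet_derivative f (at x)) (at x)" using fd_works[OF d] .
    have l: "\<And>h. frechet_derivative f (at x) h = h * frechet_derivative f (at x) 1"
      using linear_real1[OF has_derivative_linear[OF fd]] .
    have "frechet_derivative f (at x) = (\<lambda>h. h *\<^sub>R pd 1 f x)"
      unfolding pd_def by (intro ext, rule trans[OF l]) simp
    then show ?thesis using fd unfolding has_vector_derivative_def
      by (auto intro: has_derivative_at_withinI)
  qed
  have "integral\<^sup>L lborel (\<lambda>x. indicator {a..b} x *\<^sub>R pd 1 f x) = f b - f a"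
    by (rule integral_FTC_atLeastAtMost[OF ab vd]) (auto intro: continuous_on_subset[OF c])
  then show ?thesis using eq K(2)[OF aK] K(2)[OF bK] by simp
qed


lemma pd_slice1:
  fixes F :: "'a::euclidean_space \<Rightarrow> real"
  assumes "\<And>x. F differentiable at x"
  shows "pd 1 (\<lambda>t. F (p + t *\<^sub>R d)) = (\<lambda>t. pd d F (p + t *\<^sub>R d))"
    and "\<And>t. (\<lambda>t. F (p + t *\<^sub>R d)) differentiable at t"
proof -
  show "pd 1 (\<lambda>t. F (p + t *\<^sub>R d)) = (\<lambda>t. pd d F (p + t *\<^sub>R d))"
  proof
    fix t
    show "pd 1 (\<lambda>t. F (p + t *\<^sub>R d)) t = pd d F (p + t *\<^sub>R d)"
      using frechet_derivative_at[OF slice_has_derivative[where G=F and p=p and t=t and d=d and c=1, OF assms], symmetric]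
      by (simp add: pd_def)
  qed
  fix t show "(\<lambda>t. F (p + t *\<^sub>R d)) differentiable at t"
    using slice_has_derivative[where G=F and p=p and t=t and d=d and c=1, OF assms] unfolding differentiable_def by auto
qed

lemma slice_int_zero:
  fixes F :: "'a::euclidean_space \<Rightarrow> real"
  assumes dF: "\<And>x. F differentiable at x" and d: "d \<in> Basis" and c: "continuous_on UNIV (pd d F)"
    and K: "compact K" "\<And>x. x \<notin> K \<Longrightarrow> F x = 0"
  shows "integral\<^sup>L lborel (\<lambda>t. pd d F (p + t *\<^sub>R d)) = 0"
proof -
  let ?g = "\<lambda>t. F (p + t *\<^sub>R d)"
  have "integral\<^sup>L lborel (pd 1 ?g) = 0"
  proof (rule ftc_zero[OF pd_slice1(2)[OF dF] _ compact_slice[OF K(1) d, of p]])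
    show "continuous_on UNIV (pd 1 ?g)" unfolding pd_slice1(1)[OF dF]
      by (intro continuous_on_compose2[OF c]) (auto intro!: continuous_intros)
    show "\<And>x. x \<notin> {t. p + t *\<^sub>R d \<in> K} \<Longrightarrow> F (p + x *\<^sub>R d) = 0" using K(2) by simp
  qed
  then show ?thesis unfolding pd_slice1(1)[OF dF] .
qed

lemma ftc_zero2:
  fixes F :: "real \<times> real \<Rightarrow> real"
  assumes dF: "\<And>x. F differentiable at x" and b: "b \<in> Basis" and c: "continuous_on UNIV (pd b F)"
    and K: "compact K" "\<And>x. x \<notin> K \<Longrightarrow> F x = 0"
  shows "integral\<^sup>L lborel (pd b F) = 0"
proof -
  have z: "pd b F x = 0" if "x \<notin> K" for x
    using zero_outside_pd[OF compact_imp_closed[OF K(1)] K(2) that] .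
  have int: "integrable (lborel \<Otimes>\<^sub>M lborel) (pd b F)"
    unfolding lborel_prod using integrable_cont_compact[OF c K(1) z] .
  have b2: "b = (1,0) \<or> b = (0,1)" using b Basis_real_prod by auto
  then show ?thesis
  proof
    assume b1: "b = (1,0)"
    have "integral\<^sup>L lborel (pd b F) = integral\<^sup>L (lborel \<Otimes>\<^sub>M lborel) (pd b F)" by (simp add: lborel_prod)
    also have "\<dots> = (\<integral>y. (\<integral>x. pd b F (x, y) \<partial>lborel) \<partial>lborel)"
      using lborel_pair.integral_snd[of "\<lambda>x y. pd b F (x, y)"] int by simp
    also have "(\<lambda>y. (\<integral>x. pd b F (x, y) \<partial>lborel)) = (\<lambda>y. 0)"
    proof
      fix y
      show "(\<integral>x. pd b F (x, y) \<partial>lborel) = 0"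
        using slice_int_zero[OF dF b c K, of "(0,y)"] b1 by simp
    qed
    finally show ?thesis by simp
  next
    assume b1: "b = (0,1)"
    have "integral\<^sup>L lborel (pd b F) = integral\<^sup>L (lborel \<Otimes>\<^sub>M lborel) (pd b F)" by (simp add: lborel_prod)
    also have "\<dots> = (\<integral>x. (\<integral>y. pd b F (x, y) \<partial>lborel) \<partial>lborel)"
      using lborel_pair.integral_fst'[OF int] by simp
    also have "(\<lambda>x. (\<integral>y. pd b F (x, y) \<partial>lborel)) = (\<lambda>x. 0)"
    proof
      fix x
      show "(\<integral>y. pd b F (x, y) \<partial>lborel) = 0"
        using slice_int_zero[OF dF b c K, of "(x,0)"] b1 by simp
    qed
    finally show ?thesis by simp
  qed
qed

lemma abs_le_eps: "(e::real) > 0 \<Longrightarrow> \<bar>v\<bar> \<le> e + v\<^sup>2 / e"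
proof -
  assume e: "e > 0"
  have "0 \<le> (\<bar>v\<bar> - e)\<^sup>2" by simp
  then have "2 * e * \<bar>v\<bar> \<le> v\<^sup>2 + e\<^sup>2" by (simp add: power2_eq_square algebra_simps)
  then have "\<bar>v\<bar> \<le> (v\<^sup>2 + e\<^sup>2) / (2 * e)" using e by (simp add: field_simps)
  also have "\<dots> \<le> e + v\<^sup>2 / e" using e by (simp add: field_simps power2_eq_square)
  finally show ?thesis .
qed

lemma L2_to_L1:
  fixes v :: "nat \<Rightarrow> 'a \<Rightarrow> real"
  assumes fm: "finite_measure M" and m: "\<And>n. v n \<in> borel_measurable M"
    and i: "\<And>n. integrable M (\<lambda>x. (v n x)\<^sup>2)"
    and lim: "(\<lambda>n. \<integral>x. (v n x)\<^sup>2 \<partial>M) \<longlonglongrightarrow> 0"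
  shows "(\<lambda>n. \<integral>x. \<bar>v n x\<bar> \<partial>M) \<longlonglongrightarrow> 0"
proof (rule LIMSEQ_I)
  fix r :: real assume r: "r > 0"
  interpret finite_measure M by (rule fm)
  define mu where "mu = measure M (space M)"
  have mu0: "mu \<ge> 0" unfolding mu_def by simp
  define e where "e = r / (2 * (mu + 1))"
  have e: "e > 0" using r mu0 unfolding e_def by simp
  have emu: "e * mu < r / 2" using r mu0 unfolding e_def by (simp add: field_simps)
  have "\<forall>\<^sub>F n in sequentially. (\<integral>x. (v n x)\<^sup>2 \<partial>M) < e * (r / 2)"
    by (rule order_tendstoD(2)[OF lim]) (use e r in simp)
  then obtain N where N: "\<And>n. n \<ge> N \<Longrightarrow> (\<integral>x. (v n x)\<^sup>2 \<partial>M) < e * (r / 2)"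
    unfolding eventually_sequentially by blast
  have "norm ((\<integral>x. \<bar>v n x\<bar> \<partial>M) - 0) < r" if n: "n \<ge> N" for n
  proof -
    have int2: "integrable M (\<lambda>x. e + (v n x)\<^sup>2 / e)" using i by auto
    have "(\<integral>x. \<bar>v n x\<bar> \<partial>M) \<le> (\<integral>x. e + (v n x)\<^sup>2 / e \<partial>M)"
      by (rule integral_mono'[OF int2]) (use abs_le_eps[OF e] e in auto)
    also have "\<dots> = e * mu + (\<integral>x. (v n x)\<^sup>2 \<partial>M) / e"
      using i by (simp add: Bochner_Integration.integral_add mu_def)
    also have "\<dots> < r / 2 + r / 2"
    proof -
      have "(\<integral>x. (v n x)\<^sup>2 \<partial>M) / e < r / 2" using N[OF n] e by (simp add: divide_less_eq mult.commute)
      then show ?thesis using emu by linarith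
    qed
    finally have "(\<integral>x. \<bar>v n x\<bar> \<partial>M) < r" by simp
    moreover have "0 \<le> (\<integral>x. \<bar>v n x\<bar> \<partial>M)" by simp
    ultimately show ?thesis by simp
  qed
  then show "\<exists>N. \<forall>n\<ge>N. norm ((\<integral>x. \<bar>v n x\<bar> \<partial>M) - 0) < r" by blast
qed


lemma fin_lebesgue_on: "U \<in> sets borel \<Longrightarrow> bounded (U::'a::euclidean_space set) \<Longrightarrow> finite_measure (lebesgue_on U)"
  by (simp add: bounded_set_imp_lmeasurable finite_measure_lebesgue_on)

lemma integrable_mult_bdd:
  fixes f h :: "'a \<Rightarrow> real"
  assumes "integrable M f" "h \<in> borel_measurable M" "\<And>x. \<bar>h x\<bar> \<le> C"
  shows "integrable M (\<lambda>x. f x * h x)"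
proof -
  have i1: "integrable M (\<lambda>x. C * f x)" using assms(1) by simp
  have m: "(\<lambda>x. f x * h x) \<in> borel_measurable M" using assms by (auto intro: borel_measurable_integrable)
  have "norm (f x * h x) \<le> norm (C * f x)" for x
  proof -
    have "\<bar>f x * h x\<bar> = \<bar>f x\<bar> * \<bar>h x\<bar>" by (simp add: abs_mult)
    also have "\<dots> \<le> \<bar>f x\<bar> * \<bar>C\<bar>" using assms(3)[of x] by (intro mult_left_mono) auto
    finally show ?thesis by (simp add: abs_mult mult.commute)
  qed
  then have ae: "AE x in M. norm (f x * h x) \<le> norm (C * f x)" by simp
  show ?thesis by (rule Bochner_Integration.integrable_bound[OF i1 m ae])
qed

lemma bdd_integrable:
  fixes h :: "'a \<Rightarrow> real"
  assumes "finite_measure M" "h \<in> borel_measurable M" "\<And>x. \<bar>h x\<bar> \<le> C"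
  shows "integrable M h"
proof -
  interpret finite_measure M by fact
  have "integrable M (\<lambda>x. (1::real) * h x)"
    by (rule integrable_mult_bdd[OF _ assms(2,3)]) simp
  then show ?thesis by simp
qed

lemma lim_mult_bounded:
  fixes v :: "nat \<Rightarrow> 'a \<Rightarrow> real"
  assumes fm: "finite_measure M" and m: "\<And>n. v n \<in> borel_measurable M"
    and i: "\<And>n. integrable M (\<lambda>x. (v n x)\<^sup>2)"
    and lim: "(\<lambda>n. \<integral>x. (v n x)\<^sup>2 \<partial>M) \<longlonglongrightarrow> 0"
    and h: "h \<in> borel_measurable M" "\<And>x. \<bar>h x\<bar> \<le> C"
  shows "(\<lambda>n. \<integral>x. v n x * h x \<partial>M) \<longlonglongrightarrow> 0"
proof (rule Lim_null_comparison)
  interpret finite_measure M by (rule fm)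
  have iv: "integrable M (v n)" for n using square_integrable_imp_integrable[OF m i] .
  have C0: "C \<ge> 0" using h(2)[of undefined] by simp
  show "\<forall>\<^sub>F n in sequentially. norm (\<integral>x. v n x * h x \<partial>M) \<le> C * (\<integral>x. \<bar>v n x\<bar> \<partial>M)"
  proof (intro always_eventually allI)
    fix n
    have "norm (\<integral>x. v n x * h x \<partial>M) \<le> (\<integral>x. \<bar>v n x * h x\<bar> \<partial>M)"
      unfolding real_norm_def by (rule integral_abs_bound)
    also have "\<dots> \<le> (\<integral>x. C * \<bar>v n x\<bar> \<partial>M)"
    proof (rule integral_mono)
      show "integrable M (\<lambda>x. \<bar>v n x * h x\<bar>)" using integrable_mult_bdd[OF iv h] by simp
      show "integrable M (\<lambda>x. C * \<bar>v n x\<bar>)" using iv by simp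
      fix x show "\<bar>v n x * h x\<bar> \<le> C * \<bar>v n x\<bar>"
        using h(2)[of x] by (simp add: abs_mult mult_right_mono mult.commute)
    qed
    finally show "norm (\<integral>x. v n x * h x \<partial>M) \<le> C * (\<integral>x. \<bar>v n x\<bar> \<partial>M)" by simp
  qed
  show "(\<lambda>n. C * (\<integral>x. \<bar>v n x\<bar> \<partial>M)) \<longlonglongrightarrow> 0"
    using tendsto_mult_right_zero[OF L2_to_L1[OF fm m i lim]] .
qed

definition ZI :: "'a::euclidean_space \<Rightarrow> bool" where
  "ZI b \<longleftrightarrow> (\<forall>F K. (\<forall>x. F differentiable at x) \<longrightarrow> continuous_on UNIV (pd b F) \<longrightarrow> compact K \<longrightarrow>
      (\<forall>x. x \<notin> K \<longrightarrow> F x = 0) \<longrightarrow> integral\<^sup>L lborel (pd b F) = 0)"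

lemma ZI_real: "ZI (1::real)"
  unfolding ZI_def using ftc_zero by blast

lemma ZI_prod: "b \<in> Basis \<Longrightarrow> ZI (b :: real \<times> real)"
  unfolding ZI_def using ftc_zero2 by blast

lemma test_fun_borel: "\<phi> \<in> test_fun U \<Longrightarrow> \<phi> \<in> borel_measurable borel"
  by (intro borel_measurable_continuous_onI smooth_cont test_fun_props(1))

lemma test_fun_pd_borel: "\<phi> \<in> test_fun U \<Longrightarrow> b \<in> Basis \<Longrightarrow> pd b \<phi> \<in> borel_measurable borel"
  by (intro borel_measurable_continuous_onI smooth_pd_cont test_fun_props(1))

lemma ibp_test:
  fixes \<phi> \<psi> :: "'a::euclidean_space \<Rightarrow> real"
  assumes \<phi>: "\<phi> \<in> test_fun U" and \<psi>: "\<psi> \<in> test_fun U" and b: "b \<in> Basis" and Z: "ZI b"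
  shows "integral\<^sup>L lborel (\<lambda>x. \<phi> x * pd b \<psi> x) = - integral\<^sup>L lborel (\<lambda>x. pd b \<phi> x * \<psi> x)"
proof -
  let ?F = "\<lambda>x. \<phi> x * \<psi> x"
  have s\<phi>: "smooth_fun \<phi>" and s\<psi>: "smooth_fun \<psi>" using test_fun_props(1) \<phi> \<psi> by auto
  have hd: "(?F has_derivative (\<lambda>h. \<phi> x * frechet_derivative \<psi> (at x) h + frechet_derivative \<phi> (at x) h * \<psi> x)) (at x)" for x
    using has_derivative_mult[OF fd_works[OF smooth_differentiable[OF s\<phi>]] fd_works[OF smooth_differentiable[OF s\<psi>]]] .
  have pdF: "pd b ?F = (\<lambda>x. \<phi> x * pd b \<psi> x + pd b \<phi> x * \<psi> x)"
  proof
    fix x show "pd b ?F x = \<phi> x * pd b \<psi> x + pd b \<phi> x * \<psi> x"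
      using frechet_derivative_at[OF hd[of x], symmetric] unfolding pd_def by simp
  qed
  have dF: "\<forall>x. ?F differentiable at x" using hd unfolding differentiable_def by blast
  have c1: "continuous_on UNIV (\<lambda>x. \<phi> x * pd b \<psi> x)"
    by (intro continuous_intros smooth_cont smooth_pd_cont s\<phi> s\<psi> b)
  have c2: "continuous_on UNIV (\<lambda>x. pd b \<phi> x * \<psi> x)"
    by (intro continuous_intros smooth_cont smooth_pd_cont s\<phi> s\<psi> b)
  have cF: "continuous_on UNIV (pd b ?F)" unfolding pdF by (intro continuous_intros c1 c2)
  have K: "compact (csupp \<phi>)" using test_fun_props(2)[OF \<phi>] .
  have zF: "\<forall>x. x \<notin> csupp \<phi> \<longrightarrow> ?F x = 0" using outside_csupp by auto
  have i1: "integrable lborel (\<lambda>x. \<phi> x * pd b \<psi> x)"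
    by (rule integrable_cont_compact[OF c1 K]) (simp add: outside_csupp)
  have i2: "integrable lborel (\<lambda>x. pd b \<phi> x * \<psi> x)"
    by (rule integrable_cont_compact[OF c2 K]) (simp add: pd_outside_csupp)
  have "integral\<^sup>L lborel (pd b ?F) = 0" using Z dF cF K zF unfolding ZI_def by blast
  then have "integral\<^sup>L lborel (\<lambda>x. \<phi> x * pd b \<psi> x) + integral\<^sup>L lborel (\<lambda>x. pd b \<phi> x * \<psi> x) = 0"
    unfolding pdF using i1 i2 by simp
  then show ?thesis by simp
qed


lemma test_fun_zero_outside: "\<phi> \<in> test_fun U \<Longrightarrow> x \<notin> U \<Longrightarrow> \<phi> x = 0"
proof -
  assume a: "\<phi> \<in> test_fun U" "x \<notin> U"
  have "x \<notin> csupp \<phi>" using test_fun_props(3)[OF a(1)] a(2) by (rule contra_subsetD)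
  then show ?thesis by (rule outside_csupp)
qed

lemma test_fun_pd_zero_outside: "\<phi> \<in> test_fun U \<Longrightarrow> x \<notin> U \<Longrightarrow> pd b \<phi> x = 0"
proof -
  assume a: "\<phi> \<in> test_fun U" "x \<notin> U"
  have "x \<notin> csupp \<phi>" using test_fun_props(3)[OF a(1)] a(2) by (rule contra_subsetD)
  then show ?thesis by (rule pd_outside_csupp)
qed

lemma integral_lebesgue_on_zero:
  fixes f :: "'a::euclidean_space \<Rightarrow> real"
  assumes U: "U \<in> sets borel" and f: "f \<in> borel_measurable borel" and z: "\<And>x. x \<notin> U \<Longrightarrow> f x = 0"
  shows "integral\<^sup>L (lebesgue_on U) f = integral\<^sup>L lborel f"
proof -
  have "(\<lambda>x. indicator U x * f x) = f"
  proof
    fix x show "indicator U x * f x = f x" using z[of x] by (cases "x \<in> U") auto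
  qed
  then show ?thesis using integral_lebesgue_on_borel[OF U f] by simp
qed

lemma ibp_test_on:
  fixes \<phi> \<psi> :: "'a::euclidean_space \<Rightarrow> real"
  assumes U: "U \<in> sets borel" and \<phi>: "\<phi> \<in> test_fun U" and \<psi>: "\<psi> \<in> test_fun U" and b: "b \<in> Basis" and Z: "ZI b"
  shows "integral\<^sup>L (lebesgue_on U) (\<lambda>x. \<phi> x * pd b \<psi> x) = - integral\<^sup>L (lebesgue_on U) (\<lambda>x. pd b \<phi> x * \<psi> x)"
proof -
  have "integral\<^sup>L (lebesgue_on U) (\<lambda>x. \<phi> x * pd b \<psi> x) = integral\<^sup>L lborel (\<lambda>x. \<phi> x * pd b \<psi> x)"
    by (rule integral_lebesgue_on_zero[OF U],
        intro borel_measurable_times test_fun_borel[OF \<phi>] test_fun_pd_borel[OF \<psi> b],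
        simp add: test_fun_zero_outside[OF \<phi>])
  also have "\<dots> = - integral\<^sup>L lborel (\<lambda>x. pd b \<phi> x * \<psi> x)" by (rule ibp_test[OF \<phi> \<psi> b Z])
  also have "integral\<^sup>L lborel (\<lambda>x. pd b \<phi> x * \<psi> x) = integral\<^sup>L (lebesgue_on U) (\<lambda>x. pd b \<phi> x * \<psi> x)"
    by (rule integral_lebesgue_on_zero[OF U, symmetric],
        intro borel_measurable_times test_fun_borel[OF \<psi>] test_fun_pd_borel[OF \<phi> b],
        simp add: test_fun_zero_outside[OF \<psi>])
  finally show ?thesis .
qed

lemma sq_diff_integrable:
  fixes u \<phi> :: "'a \<Rightarrow> real"
  assumes fm: "finite_measure M" and u: "u \<in> borel_measurable M" "integrable M (\<lambda>x. (u x)\<^sup>2)"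
    and \<phi>: "\<phi> \<in> borel_measurable M" "\<And>x. \<bar>\<phi> x\<bar> \<le> C"
  shows "integrable M (\<lambda>x. (u x - \<phi> x)\<^sup>2)"
proof -
  interpret finite_measure M by (rule fm)
  have iu: "integrable M u" using square_integrable_imp_integrable[OF u] .
  have i2: "integrable M (\<lambda>x. u x * \<phi> x)" by (rule integrable_mult_bdd[OF iu \<phi>])
  have i3: "integrable M (\<lambda>x. (\<phi> x)\<^sup>2)"
  proof (rule bdd_integrable[OF fm])
    show "(\<lambda>x. (\<phi> x)\<^sup>2) \<in> borel_measurable M" using \<phi> by simp
    fix x
    have "\<bar>\<phi> x\<bar>\<^sup>2 \<le> C\<^sup>2" using \<phi>(2)[of x] by (intro power_mono) auto
    then show "\<bar>(\<phi> x)\<^sup>2\<bar> \<le> C\<^sup>2" by simp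
  qed
  have "integrable M (\<lambda>x. (u x)\<^sup>2 - 2 * (u x * \<phi> x) + (\<phi> x)\<^sup>2)"
    using u(2) i2 i3 by auto
  then show ?thesis by (simp add: power2_diff algebra_simps)
qed

lemma tendsto_from_diff: "(\<lambda>n. c - a n) \<longlonglongrightarrow> 0 \<Longrightarrow> a \<longlonglongrightarrow> (c::real)"
  using tendsto_diff[OF tendsto_const[of c], of "\<lambda>n. c - a n" 0] by simp

lemma weak_from_limit:
  fixes U :: "'a::euclidean_space set"
  assumes U: "U \<in> sets borel" "bounded U" and b: "b \<in> Basis" "ZI b"
    and u: "u \<in> borel_measurable (lebesgue_on U)" "integrable (lebesgue_on U) (\<lambda>x. (u x)\<^sup>2)"
    and g: "g \<in> borel_measurable (lebesgue_on U)" "integrable (lebesgue_on U) (\<lambda>x. (g x)\<^sup>2)"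
    and \<phi>: "\<And>n. \<phi> n \<in> test_fun U"
    and l1: "(\<lambda>n. \<integral>x. (u x - \<phi> n x)\<^sup>2 \<partial>lebesgue_on U) \<longlonglongrightarrow> 0"
    and l2: "(\<lambda>n. \<integral>x. (g x - pd b (\<phi> n) x)\<^sup>2 \<partial>lebesgue_on U) \<longlonglongrightarrow> 0"
  shows "weak_pd U b u g"
  unfolding weak_pd_def
proof (intro ballI conjI)
  fix \<psi> assume \<psi>: "\<psi> \<in> test_fun U"
  let ?M = "lebesgue_on U"
  have fm: "finite_measure ?M" using fin_lebesgue_on[OF U] .
  interpret finite_measure ?M by (rule fm)
  obtain C\<psi> where C\<psi>: "\<And>x. \<bar>\<psi> x\<bar> \<le> C\<psi>" using test_fun_bounded[OF \<psi>] by blast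
  obtain Ch where Ch: "\<And>x. \<bar>pd b \<psi> x\<bar> \<le> Ch" using test_fun_pd_bounded[OF \<psi> b(1)] by blast
  have m\<psi>: "\<psi> \<in> borel_measurable ?M" using borel_lebesgue_on[OF test_fun_borel[OF \<psi>]] .
  have mh: "pd b \<psi> \<in> borel_measurable ?M" using borel_lebesgue_on[OF test_fun_pd_borel[OF \<psi> b(1)]] .
  have m\<phi>: "\<phi> n \<in> borel_measurable ?M" for n using borel_lebesgue_on[OF test_fun_borel[OF \<phi>]] .
  have mp\<phi>: "pd b (\<phi> n) \<in> borel_measurable ?M" for n using borel_lebesgue_on[OF test_fun_pd_borel[OF \<phi> b(1)]] .
  have iu: "integrable ?M u" using square_integrable_imp_integrable[OF u] .
  have ig: "integrable ?M g" using square_integrable_imp_integrable[OF g] .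
  show i1: "integrable ?M (\<lambda>x. u x * pd b \<psi> x)" by (rule integrable_mult_bdd[OF iu mh Ch])
  show i2: "integrable ?M (\<lambda>x. g x * \<psi> x)" by (rule integrable_mult_bdd[OF ig m\<psi> C\<psi>])
  have bd\<phi>: "\<exists>C. \<forall>x. \<bar>\<phi> n x\<bar> \<le> C" for n using test_fun_bounded[OF \<phi>] .
  have bdp\<phi>: "\<exists>C. \<forall>x. \<bar>pd b (\<phi> n) x\<bar> \<le> C" for n using test_fun_pd_bounded[OF \<phi> b(1)] .
  have sq1: "integrable ?M (\<lambda>x. (u x - \<phi> n x)\<^sup>2)" for n
    using bd\<phi>[of n] sq_diff_integrable[OF fm u m\<phi>] by blast
  have sq2: "integrable ?M (\<lambda>x. (g x - pd b (\<phi> n) x)\<^sup>2)" for n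
    using bdp\<phi>[of n] sq_diff_integrable[OF fm g mp\<phi>] by blast
  have A0: "(\<lambda>n. \<integral>x. (u x - \<phi> n x) * pd b \<psi> x \<partial>?M) \<longlonglongrightarrow> 0"
    by (rule lim_mult_bounded[OF fm _ sq1 l1 mh Ch]) (use u m\<phi> in auto)
  have B0: "(\<lambda>n. \<integral>x. (g x - pd b (\<phi> n) x) * \<psi> x \<partial>?M) \<longlonglongrightarrow> 0"
    by (rule lim_mult_bounded[OF fm _ sq2 l2 m\<psi> C\<psi>]) (use g mp\<phi> in auto)
  have iA: "integrable ?M (\<lambda>x. \<phi> n x * pd b \<psi> x)" for n
    using bd\<phi>[of n] integrable_mult_bdd[OF bdd_integrable[OF fm m\<phi>] mh Ch] by blast
  have iB: "integrable ?M (\<lambda>x. pd b (\<phi> n) x * \<psi> x)" for n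
    using bdp\<phi>[of n] integrable_mult_bdd[OF bdd_integrable[OF fm mp\<phi>] m\<psi> C\<psi>] by blast
  have eA: "(\<integral>x. (u x - \<phi> n x) * pd b \<psi> x \<partial>?M) = (\<integral>x. u x * pd b \<psi> x \<partial>?M) - (\<integral>x. \<phi> n x * pd b \<psi> x \<partial>?M)" for n
    using i1 iA[of n] by (simp add: left_diff_distrib Bochner_Integration.integral_diff)
  have eB: "(\<integral>x. (g x - pd b (\<phi> n) x) * \<psi> x \<partial>?M) = (\<integral>x. g x * \<psi> x \<partial>?M) - (\<integral>x. pd b (\<phi> n) x * \<psi> x \<partial>?M)" for n
    using i2 iB[of n] by (simp add: left_diff_distrib Bochner_Integration.integral_diff)
  have LA: "(\<lambda>n. \<integral>x. \<phi> n x * pd b \<psi> x \<partial>?M) \<longlonglongrightarrow> (\<integral>x. u x * pd b \<psi> x \<partial>?M)"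
    by (rule tendsto_from_diff) (use A0 eA in simp)
  have LB: "(\<lambda>n. \<integral>x. pd b (\<phi> n) x * \<psi> x \<partial>?M) \<longlonglongrightarrow> (\<integral>x. g x * \<psi> x \<partial>?M)"
    by (rule tendsto_from_diff) (use B0 eB in simp)
  have "(\<lambda>n. \<integral>x. \<phi> n x * pd b \<psi> x \<partial>?M) = (\<lambda>n. - (\<integral>x. pd b (\<phi> n) x * \<psi> x \<partial>?M))"
    using ibp_test_on[OF U(1) \<phi> \<psi> b] by simp
  with LA have "(\<lambda>n. - (\<integral>x. pd b (\<phi> n) x * \<psi> x \<partial>?M)) \<longlonglongrightarrow> (\<integral>x. u x * pd b \<psi> x \<partial>?M)" by simp
  moreover have "(\<lambda>n. - (\<integral>x. pd b (\<phi> n) x * \<psi> x \<partial>?M)) \<longlonglongrightarrow> - (\<integral>x. g x * \<psi> x \<partial>?M)"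
    using tendsto_minus[OF LB] .
  ultimately show "(\<integral>x. u x * pd b \<psi> x \<partial>?M) = - (\<integral>x. g x * \<psi> x \<partial>?M)" by (rule LIMSEQ_unique)
qed

definition NN :: "'a::euclidean_space set \<Rightarrow> ('a \<Rightarrow> real) \<Rightarrow> ennreal" where
  "NN U f = (\<integral>\<^sup>+x. ennreal ((f x)\<^sup>2) * indicator U x \<partial>lborel)"

lemma NN_lebesgue_on:
  assumes U: "U \<in> sets borel"
  shows "NN U f = (\<integral>\<^sup>+x. ennreal ((f x)\<^sup>2) \<partial>lebesgue_on U)"
  unfolding NN_def using nn_integral_lebesgue_on_borel[OF U] by simp

lemma NN_integrable:
  fixes f :: "'a::euclidean_space \<Rightarrow> real"
  assumes U: "U \<in> sets borel" and f: "f \<in> borel_measurable borel"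
  shows "integrable (lebesgue_on U) (\<lambda>x. (f x)\<^sup>2) \<longleftrightarrow> NN U f < \<infinity>"
proof -
  have m: "(\<lambda>x. (f x)\<^sup>2) \<in> borel_measurable (lebesgue_on U)" using borel_lebesgue_on[OF f] by simp
  show ?thesis unfolding integrable_iff_bounded NN_lebesgue_on[OF U] using m by simp
qed

lemma NN_integral:
  fixes f :: "'a::euclidean_space \<Rightarrow> real"
  assumes U: "U \<in> sets borel" and f: "f \<in> borel_measurable borel"
  shows "integral\<^sup>L (lebesgue_on U) (\<lambda>x. (f x)\<^sup>2) = enn2real (NN U f)"
proof -
  have m: "(\<lambda>x. (f x)\<^sup>2) \<in> borel_measurable (lebesgue_on U)" using borel_lebesgue_on[OF f] by simp
  show ?thesis unfolding NN_lebesgue_on[OF U] by (rule integral_eq_nn_integral[OF m]) simp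
qed

lemma NN_L2:
  fixes f :: "'a::euclidean_space \<Rightarrow> real"
  assumes U: "U \<in> sets borel" and f: "f \<in> borel_measurable borel"
  shows "L2 U f \<longleftrightarrow> NN U f < \<infinity>"
  unfolding L2_def using NN_integrable[OF U f] borel_lebesgue_on[OF f] by simp

lemma NN_tendsto:
  fixes f :: "nat \<Rightarrow> 'a::euclidean_space \<Rightarrow> real"
  assumes U: "U \<in> sets borel" and f: "\<And>n. f n \<in> borel_measurable borel" and fin: "\<And>n. NN U (f n) < \<infinity>"
  shows "(\<lambda>n. \<integral>x. (f n x)\<^sup>2 \<partial>lebesgue_on U) \<longlonglongrightarrow> 0 \<longleftrightarrow> (\<lambda>n. NN U (f n)) \<longlonglongrightarrow> 0"
proof -
  have e: "NN U (f n) = ennreal (\<integral>x. (f n x)\<^sup>2 \<partial>lebesgue_on U)" for n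
    unfolding NN_integral[OF U f] using fin[of n] by (simp add: less_top)
  have nn: "\<forall>\<^sub>F n in sequentially. 0 \<le> (\<integral>x. (f n x)\<^sup>2 \<partial>lebesgue_on U)" by simp
  show ?thesis unfolding e using tendsto_ennreal_iff[OF nn, of 0] by simp
qed

lemma nn_prod:
  fixes a c :: "real \<Rightarrow> ennreal"
  assumes a: "a \<in> borel_measurable borel" and c: "c \<in> borel_measurable borel"
  shows "(\<integral>\<^sup>+z. a (fst z) * c (snd z) \<partial>lborel) = (\<integral>\<^sup>+x. a x \<partial>lborel) * (\<integral>\<^sup>+y. c y \<partial>lborel)"
proof -
  have m: "(\<lambda>z. a (fst z) * c (snd z)) \<in> borel_measurable (lborel \<Otimes>\<^sub>M lborel)"
    using a c by measurable
  have "(\<integral>\<^sup>+z. a (fst z) * c (snd z) \<partial>lborel) = (\<integral>\<^sup>+z. a (fst z) * c (snd z) \<partial>(lborel \<Otimes>\<^sub>M lborel))"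
    by (simp add: lborel_prod)
  also have "\<dots> = (\<integral>\<^sup>+x. \<integral>\<^sup>+y. a x * c y \<partial>lborel \<partial>lborel)"
    using lborel.nn_integral_fst[OF m] by simp
  also have "\<dots> = (\<integral>\<^sup>+x. a x * (\<integral>\<^sup>+y. c y \<partial>lborel) \<partial>lborel)"
    by (simp add: nn_integral_cmult c)
  also have "\<dots> = (\<integral>\<^sup>+x. a x \<partial>lborel) * (\<integral>\<^sup>+y. c y \<partial>lborel)"
    by (simp add: nn_integral_multc a)
  finally show ?thesis .
qed

lemma NN_tensor:
  fixes f h :: "real \<Rightarrow> real"
  assumes f[measurable]: "f \<in> borel_measurable borel" and h[measurable]: "h \<in> borel_measurable borel"
    and A[measurable]: "A \<in> sets borel" and B[measurable]: "B \<in> sets borel"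
  shows "NN (A \<times> B) (tensor f h) = NN A f * NN B h"
proof -
  have "NN (A \<times> B) (tensor f h) =
     (\<integral>\<^sup>+z. (ennreal ((f (fst z))\<^sup>2) * indicator A (fst z)) * (ennreal ((h (snd z))\<^sup>2) * indicator B (snd z)) \<partial>lborel)"
    unfolding NN_def
  proof (intro nn_integral_cong)
    fix z :: "real \<times> real"
    obtain x y where z: "z = (x, y)" by (cases z)
    have e: "ennreal ((f x * h y)\<^sup>2) = ennreal ((f x)\<^sup>2) * ennreal ((h y)\<^sup>2)"
      by (simp add: power_mult_distrib ennreal_mult)
    show "ennreal ((tensor f h z)\<^sup>2) * indicator (A \<times> B) z =
      ennreal ((f (fst z))\<^sup>2) * indicator A (fst z) * (ennreal ((h (snd z))\<^sup>2) * indicator B (snd z))"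
      unfolding z tensor_def by (simp add: e indicator_times mult_ac)
  qed
  also have "\<dots> = NN A f * NN B h" unfolding NN_def
    by (rule nn_prod) measurable
  finally show ?thesis .
qed


lemma bm_fst: "f \<in> borel_measurable borel \<Longrightarrow> (\<lambda>z::real\<times>real. f (fst z)) \<in> borel_measurable borel"
  by (metis borel_prod measurable_fst'')

lemma bm_snd: "f \<in> borel_measurable borel \<Longrightarrow> (\<lambda>z::real\<times>real. f (snd z)) \<in> borel_measurable borel"
  by (metis borel_prod measurable_snd'')

lemma bm_tensor: "f \<in> borel_measurable borel \<Longrightarrow> h \<in> borel_measurable borel \<Longrightarrow> tensor f h \<in> borel_measurable borel"
proof -
  assume f: "f \<in> borel_measurable borel" and h: "h \<in> borel_measurable borel"
  have "tensor f h = (\<lambda>z. f (fst z) * h (snd z))" unfolding tensor_def by auto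
  then show ?thesis using borel_measurable_times[OF bm_fst[OF f] bm_snd[OF h]] by simp
qed

lemma borel_Times: "A \<in> sets borel \<Longrightarrow> B \<in> sets borel \<Longrightarrow> A \<times> B \<in> sets (borel :: (real \<times> real) measure)"
  by (metis borel_prod pair_measureI)

lemma sq_add_le: "((x::real) + y)\<^sup>2 \<le> 2 * x\<^sup>2 + 2 * y\<^sup>2"
proof -
  have "0 \<le> (x - y)\<^sup>2" by simp
  then show ?thesis by (simp add: power2_eq_square algebra_simps)
qed

lemma NN_add_le:
  fixes f g :: "'a::euclidean_space \<Rightarrow> real"
  assumes f[measurable]: "f \<in> borel_measurable borel" and g[measurable]: "g \<in> borel_measurable borel"
    and U[measurable]: "U \<in> sets borel"
  shows "NN U (\<lambda>x. f x + g x) \<le> 2 * NN U f + 2 * NN U g"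
proof -
  have "NN U (\<lambda>x. f x + g x) \<le> (\<integral>\<^sup>+x. 2 * (ennreal ((f x)\<^sup>2) * indicator U x) + 2 * (ennreal ((g x)\<^sup>2) * indicator U x) \<partial>lborel)"
    unfolding NN_def
  proof (intro nn_integral_mono)
    fix x
    have "ennreal ((f x + g x)\<^sup>2) \<le> ennreal (2 * (f x)\<^sup>2 + 2 * (g x)\<^sup>2)"
      using sq_add_le by (intro ennreal_leI) auto
    also have "\<dots> = 2 * ennreal ((f x)\<^sup>2) + 2 * ennreal ((g x)\<^sup>2)"
      by (simp add: ennreal_plus[symmetric] ennreal_mult)
    finally show "ennreal ((f x + g x)\<^sup>2) * indicator U x \<le>
      2 * (ennreal ((f x)\<^sup>2) * indicator U x) + 2 * (ennreal ((g x)\<^sup>2) * indicator U x)"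
      by (cases "x \<in> U") auto
  qed
  also have "\<dots> = 2 * NN U f + 2 * NN U g" unfolding NN_def
    by (subst nn_integral_add) (auto simp: nn_integral_cmult)
  finally show ?thesis .
qed

lemma NN_tensor_conv:
  fixes a b :: "real \<Rightarrow> real" and an bn :: "nat \<Rightarrow> real \<Rightarrow> real"
  assumes A[measurable]: "A \<in> sets borel" and B[measurable]: "B \<in> sets borel"
    and a[measurable]: "a \<in> borel_measurable borel" and b[measurable]: "b \<in> borel_measurable borel"
    and an[measurable]: "\<And>n. an n \<in> borel_measurable borel" and bn[measurable]: "\<And>n. bn n \<in> borel_measurable borel"
    and Na: "NN A a < \<infinity>" and Nb: "NN B b < \<infinity>"
    and la: "(\<lambda>n. NN A (\<lambda>x. an n x - a x)) \<longlonglongrightarrow> 0"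
    and lb: "(\<lambda>n. NN B (\<lambda>y. bn n y - b y)) \<longlonglongrightarrow> 0"
  shows "(\<lambda>n. NN (A \<times> B) (\<lambda>z. tensor (an n) (bn n) z - tensor a b z)) \<longlonglongrightarrow> 0"
proof (rule tendsto_sandwich[where f="\<lambda>n. 0"])
  let ?\<alpha> = "\<lambda>n. NN A (\<lambda>x. an n x - a x)" and ?\<beta> = "\<lambda>n. NN B (\<lambda>y. bn n y - b y)"
  let ?T = "\<lambda>n. 2 * (?\<alpha> n * (2 * ?\<beta> n + 2 * NN B b)) + 2 * (NN A a * ?\<beta> n)"
  show "\<forall>\<^sub>F n in sequentially. 0 \<le> NN (A \<times> B) (\<lambda>z. tensor (an n) (bn n) z - tensor a b z)" by simp
  show "(\<lambda>n. 0::ennreal) \<longlonglongrightarrow> 0" by simp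
  show "\<forall>\<^sub>F n in sequentially. NN (A \<times> B) (\<lambda>z. tensor (an n) (bn n) z - tensor a b z) \<le> ?T n"
  proof (intro always_eventually allI)
    fix n
    have e: "(\<lambda>z. tensor (an n) (bn n) z - tensor a b z) =
      (\<lambda>z. tensor (\<lambda>x. an n x - a x) (bn n) z + tensor a (\<lambda>y. bn n y - b y) z)"
      by (auto simp: tensor_def algebra_simps)
    have m1: "tensor (\<lambda>x. an n x - a x) (bn n) \<in> borel_measurable borel" by (rule bm_tensor) measurable
    have m2: "tensor a (\<lambda>y. bn n y - b y) \<in> borel_measurable borel" by (rule bm_tensor) measurable
    have "NN (A \<times> B) (\<lambda>z. tensor (an n) (bn n) z - tensor a b z) \<le>
       2 * NN (A \<times> B) (tensor (\<lambda>x. an n x - a x) (bn n)) + 2 * NN (A \<times> B) (tensor a (\<lambda>y. bn n y - b y))"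
      unfolding e by (rule NN_add_le[OF m1 m2]) (rule borel_Times[OF A B])
    also have "\<dots> = 2 * (?\<alpha> n * NN B (bn n)) + 2 * (NN A a * ?\<beta> n)"
      by (subst NN_tensor, measurable)+
    also have "NN B (bn n) \<le> 2 * ?\<beta> n + 2 * NN B b"
    proof -
      have "NN B (bn n) = NN B (\<lambda>y. (bn n y - b y) + b y)" by simp
      also have "\<dots> \<le> 2 * ?\<beta> n + 2 * NN B b" by (rule NN_add_le) measurable
      finally show ?thesis .
    qed
    then have "2 * (?\<alpha> n * NN B (bn n)) + 2 * (NN A a * ?\<beta> n) \<le> ?T n"
      by (intro add_mono mult_left_mono) auto
    finally show "NN (A \<times> B) (\<lambda>z. tensor (an n) (bn n) z - tensor a b z) \<le> ?T n" .
  qed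
  have "?T \<longlonglongrightarrow> 2 * (0 * (2 * 0 + 2 * NN B b)) + 2 * (NN A a * 0)"
    by (intro tendsto_intros la lb) (use Nb Na in \<open>auto simp: ennreal_mult_eq_top_iff\<close>)
  then show "?T \<longlonglongrightarrow> 0" by simp
qed

lemma NN_bounded_fin:
  fixes f :: "'a::euclidean_space \<Rightarrow> real"
  assumes A: "A \<in> sets borel" "bounded A" and f: "f \<in> borel_measurable borel" and C: "\<And>x. \<bar>f x\<bar> \<le> C"
  shows "NN A f < \<infinity>"
proof -
  have "NN A f \<le> (\<integral>\<^sup>+x. ennreal (C\<^sup>2) * indicator A x \<partial>lborel)"
    unfolding NN_def
  proof (intro nn_integral_mono)
    fix x
    have "\<bar>f x\<bar>\<^sup>2 \<le> C\<^sup>2" using C[of x] by (intro power_mono) auto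
    then have "ennreal ((f x)\<^sup>2) \<le> ennreal (C\<^sup>2)" by (intro ennreal_leI) simp
    then show "ennreal ((f x)\<^sup>2) * indicator A x \<le> ennreal (C\<^sup>2) * indicator A x"
      by (cases "x \<in> A") auto
  qed
  also have "\<dots> = ennreal (C\<^sup>2) * emeasure lborel A" using A(1) by (simp add: nn_integral_cmult_indicator)
  also have "\<dots> < \<infinity>" using emeasure_bounded_finite[OF A(2)] by (simp add: ennreal_mult_less_top)
  finally show ?thesis .
qed

lemma ae_pick:
  assumes "AE y in lborel. y \<in> B \<longrightarrow> P y" and "\<not> (AE y in lborel. y \<in> B \<longrightarrow> s y = (0::real))"
  shows "\<exists>y. y \<in> B \<and> P y \<and> s y \<noteq> 0"
proof (rule ccontr)
  assume "\<not> (\<exists>y. y \<in> B \<and> P y \<and> s y \<noteq> 0)"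
  then have "AE y in lborel. y \<in> B \<longrightarrow> s y = 0" using assms(1) by (auto elim: AE_mp)
  then show False using assms(2) by simp
qed

lemma slice_core:
  fixes \<Omega> :: "(real \<times> real) set" and A B :: "real set" and p :: "real \<Rightarrow> real \<times> real" and d :: "real \<times> real"
    and r s :: "real \<Rightarrow> real" and u G :: "real \<times> real \<Rightarrow> real" and \<Phi> :: "nat \<Rightarrow> real \<times> real \<Rightarrow> real"
  assumes d: "d \<in> Basis"
    and \<Omega>[measurable]: "\<Omega> \<in> sets borel" and A[measurable]: "A \<in> sets borel" and Ab: "bounded A"
    and B[measurable]: "B \<in> sets borel"
    and ton: "\<And>F. F \<in> borel_measurable borel \<Longrightarrow> (\<integral>\<^sup>+z. F z * indicator \<Omega> z \<partial>lborel)
         = (\<integral>\<^sup>+y. (\<integral>\<^sup>+t. F (p y + t *\<^sub>R d) * indicator A t \<partial>lborel) * indicator B y \<partial>lborel)"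
    and tmeas: "\<And>F. F \<in> borel_measurable borel \<Longrightarrow>
         (\<lambda>y. \<integral>\<^sup>+t. F (p y + t *\<^sub>R d) * indicator A t \<partial>lborel) \<in> borel_measurable borel"
    and sub: "\<And>y t. p y + t *\<^sub>R d \<in> \<Omega> \<Longrightarrow> t \<in> A"
    and tens: "\<And>y t. u (p y + t *\<^sub>R d) = r t * s y"
    and r[measurable]: "r \<in> borel_measurable borel" and s[measurable]: "s \<in> borel_measurable borel"
    and u[measurable]: "u \<in> borel_measurable borel" and G[measurable]: "G \<in> borel_measurable borel"
    and Nr: "NN A r < \<infinity>" and NG: "NN \<Omega> G < \<infinity>"
    and \<Phi>: "\<And>n. \<Phi> n \<in> test_fun \<Omega>"
    and l1: "(\<lambda>n. NN \<Omega> (\<lambda>z. u z - \<Phi> n z)) \<longlonglongrightarrow> 0"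
    and l2: "(\<lambda>n. NN \<Omega> (\<lambda>z. G z - pd d (\<Phi> n) z)) \<longlonglongrightarrow> 0"
    and nz: "\<not> (AE y in lborel. y \<in> B \<longrightarrow> s y = 0)"
  shows "H10 A r"
proof -
  have m\<Phi>[measurable]: "\<Phi> n \<in> borel_measurable borel" for n using test_fun_borel[OF \<Phi>] .
  have mp\<Phi>[measurable]: "pd d (\<Phi> n) \<in> borel_measurable borel" for n using test_fun_pd_borel[OF \<Phi> d] .
  define F where "F n z = ennreal ((u z - \<Phi> n z)\<^sup>2) + ennreal ((G z - pd d (\<Phi> n) z)\<^sup>2)" for n z
  have mF[measurable]: "F n \<in> borel_measurable borel" for n unfolding F_def by measurable
  define E where "E n y = (\<integral>\<^sup>+t. F n (p y + t *\<^sub>R d) * indicator A t \<partial>lborel)" for n y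
  have mE[measurable]: "(\<lambda>y. E n y) \<in> borel_measurable borel" for n unfolding E_def by (rule tmeas) measurable
  define W where "W n y = E n y * indicator B y" for n y
  have mW[measurable]: "(\<lambda>y. W n y) \<in> borel_measurable borel" for n unfolding W_def by measurable
  have intW: "(\<integral>\<^sup>+y. W n y \<partial>lborel) = NN \<Omega> (\<lambda>z. u z - \<Phi> n z) + NN \<Omega> (\<lambda>z. G z - pd d (\<Phi> n) z)" for n
  proof -
    have "(\<integral>\<^sup>+y. W n y \<partial>lborel) = (\<integral>\<^sup>+z. F n z * indicator \<Omega> z \<partial>lborel)"
      unfolding W_def E_def by (rule ton[symmetric]) measurable
    also have "\<dots> = NN \<Omega> (\<lambda>z. u z - \<Phi> n z) + NN \<Omega> (\<lambda>z. G z - pd d (\<Phi> n) z)"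
      unfolding NN_def F_def by (simp add: distrib_right nn_integral_add)
    finally show ?thesis .
  qed
  have limW: "(\<lambda>n. \<integral>\<^sup>+y. W n y \<partial>lborel) \<longlonglongrightarrow> 0"
    unfolding intW using tendsto_add[OF l1 l2] by simp
  have "(\<integral>\<^sup>+y. liminf (\<lambda>n. W n y) \<partial>lborel) \<le> liminf (\<lambda>n. \<integral>\<^sup>+y. W n y \<partial>lborel)"
    by (rule nn_integral_liminf) measurable
  also have "\<dots> = 0" using lim_imp_Liminf[OF _ limW] by simp
  finally have "(\<integral>\<^sup>+y. liminf (\<lambda>n. W n y) \<partial>lborel) = 0" by simp
  then have ae1: "AE y in lborel. liminf (\<lambda>n. W n y) = 0"
    by (subst (asm) nn_integral_0_iff_AE) measurable
  define H where "H y = (\<integral>\<^sup>+t. ennreal ((G (p y + t *\<^sub>R d))\<^sup>2) * indicator A t \<partial>lborel)" for y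
  have mH[measurable]: "H \<in> borel_measurable borel" unfolding H_def[abs_def]
    by (rule tmeas[of "\<lambda>z. ennreal ((G z)\<^sup>2)", simplified]) measurable
  have "(\<integral>\<^sup>+y. H y * indicator B y \<partial>lborel) = NN \<Omega> G"
    unfolding H_def NN_def by (rule ton[symmetric]) measurable
  then have "(\<integral>\<^sup>+y. H y * indicator B y \<partial>lborel) \<noteq> \<infinity>" using NG by simp
  then have ae2: "AE y in lborel. H y * indicator B y \<noteq> \<infinity>"
    by (rule nn_integral_PInf_AE[rotated]) measurable
  have "AE y in lborel. y \<in> B \<longrightarrow> liminf (\<lambda>n. E n y) = 0 \<and> H y < \<infinity>"
    using ae1 ae2 by eventually_elim (auto simp: W_def top.not_eq_extremum)
  from ae_pick[OF this nz] obtain y0 where y0: "y0 \<in> B" "liminf (\<lambda>n. E n y0) = 0" "H y0 < \<infinity>" "s y0 \<noteq> 0"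
    by blast
  obtain \<sigma> :: "nat \<Rightarrow> nat" where \<sigma>: "strict_mono \<sigma>" "(\<lambda>n. E (\<sigma> n) y0) \<longlonglongrightarrow> 0"
    using liminf_subseq_lim[of "\<lambda>n. E n y0"] y0(2) by (auto simp: o_def)
  define c where "c = 1 / s y0"
  define q where "q = p y0"
  have cs: "c * s y0 = 1" using y0(4) unfolding c_def by simp
  define ch where "ch n t = c * \<Phi> (\<sigma> n) (q + t *\<^sub>R d)" for n t
  define gr where "gr t = c * G (q + t *\<^sub>R d)" for t
  have cht: "ch n \<in> test_fun A" for n
    unfolding ch_def[abs_def] by (rule slice_test_fun[OF \<Phi> d]) (use sub in \<open>auto simp: q_def\<close>)
  have pdch: "pd 1 (ch n) = (\<lambda>t. c * pd d (\<Phi> (\<sigma> n)) (q + t *\<^sub>R d))" for n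
    unfolding ch_def[abs_def] by (rule pd_slice[OF test_fun_props(1)[OF \<Phi>] d])
  have mch[measurable]: "ch n \<in> borel_measurable borel" for n using test_fun_borel[OF cht] .
  have mpch[measurable]: "pd 1 (ch n) \<in> borel_measurable borel" for n using test_fun_pd_borel[OF cht] by simp
  have mgr[measurable]: "gr \<in> borel_measurable borel" unfolding gr_def[abs_def] by measurable
  have c2: "ennreal (c\<^sup>2) < top" by simp
  have b1: "NN A (\<lambda>t. r t - ch n t) \<le> ennreal (c\<^sup>2) * E (\<sigma> n) y0" for n
  proof -
    have "NN A (\<lambda>t. r t - ch n t) \<le> (\<integral>\<^sup>+t. ennreal (c\<^sup>2) * (F (\<sigma> n) (q + t *\<^sub>R d) * indicator A t) \<partial>lborel)"
      unfolding NN_def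
    proof (intro nn_integral_mono)
      fix t
      have "r t - ch n t = c * (u (q + t *\<^sub>R d) - \<Phi> (\<sigma> n) (q + t *\<^sub>R d))"
        unfolding ch_def q_def tens using cs by (simp add: algebra_simps)
      then have "ennreal ((r t - ch n t)\<^sup>2) = ennreal (c\<^sup>2) * ennreal ((u (q + t *\<^sub>R d) - \<Phi> (\<sigma> n) (q + t *\<^sub>R d))\<^sup>2)"
        by (simp add: power_mult_distrib ennreal_mult)
      also have "\<dots> \<le> ennreal (c\<^sup>2) * F (\<sigma> n) (q + t *\<^sub>R d)"
        unfolding F_def by (intro mult_left_mono) auto
      finally show "ennreal ((r t - ch n t)\<^sup>2) * indicator A t \<le> ennreal (c\<^sup>2) * (F (\<sigma> n) (q + t *\<^sub>R d) * indicator A t)"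
        by (cases "t \<in> A") auto
    qed
    also have "\<dots> = ennreal (c\<^sup>2) * E (\<sigma> n) y0"
      unfolding E_def q_def by (rule nn_integral_cmult) measurable
    finally show ?thesis .
  qed
  have b2: "NN A (\<lambda>t. gr t - pd 1 (ch n) t) \<le> ennreal (c\<^sup>2) * E (\<sigma> n) y0" for n
  proof -
    have "NN A (\<lambda>t. gr t - pd 1 (ch n) t) \<le> (\<integral>\<^sup>+t. ennreal (c\<^sup>2) * (F (\<sigma> n) (q + t *\<^sub>R d) * indicator A t) \<partial>lborel)"
      unfolding NN_def
    proof (intro nn_integral_mono)
      fix t
      have "gr t - pd 1 (ch n) t = c * (G (q + t *\<^sub>R d) - pd d (\<Phi> (\<sigma> n)) (q + t *\<^sub>R d))"
        unfolding gr_def pdch by (simp add: algebra_simps)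
      then have "ennreal ((gr t - pd 1 (ch n) t)\<^sup>2) = ennreal (c\<^sup>2) * ennreal ((G (q + t *\<^sub>R d) - pd d (\<Phi> (\<sigma> n)) (q + t *\<^sub>R d))\<^sup>2)"
        by (simp add: power_mult_distrib ennreal_mult)
      also have "\<dots> \<le> ennreal (c\<^sup>2) * F (\<sigma> n) (q + t *\<^sub>R d)"
        unfolding F_def by (intro mult_left_mono) auto
      finally show "ennreal ((gr t - pd 1 (ch n) t)\<^sup>2) * indicator A t \<le> ennreal (c\<^sup>2) * (F (\<sigma> n) (q + t *\<^sub>R d) * indicator A t)"
        by (cases "t \<in> A") auto
    qed
    also have "\<dots> = ennreal (c\<^sup>2) * E (\<sigma> n) y0"
      unfolding E_def q_def by (rule nn_integral_cmult) measurable
    finally show ?thesis .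
  qed
  have limE: "(\<lambda>n. ennreal (c\<^sup>2) * E (\<sigma> n) y0) \<longlonglongrightarrow> 0"
    using ennreal_tendsto_cmult[OF c2 \<sigma>(2)] by simp
  have L1: "(\<lambda>n. NN A (\<lambda>t. r t - ch n t)) \<longlonglongrightarrow> 0"
    by (rule tendsto_sandwich[OF _ _ tendsto_const limE]) (use b1 in auto)
  have L2': "(\<lambda>n. NN A (\<lambda>t. gr t - pd 1 (ch n) t)) \<longlonglongrightarrow> 0"
    by (rule tendsto_sandwich[OF _ _ tendsto_const limE]) (use b2 in auto)
  have NGr: "NN A gr = ennreal (c\<^sup>2) * H y0"
  proof -
    have "NN A gr = (\<integral>\<^sup>+t. ennreal (c\<^sup>2) * (ennreal ((G (q + t *\<^sub>R d))\<^sup>2) * indicator A t) \<partial>lborel)"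
      unfolding NN_def gr_def by (intro nn_integral_cong) (simp add: power_mult_distrib ennreal_mult mult.assoc)
    also have "\<dots> = ennreal (c\<^sup>2) * H y0" unfolding H_def q_def by (rule nn_integral_cmult) measurable
    finally show ?thesis .
  qed
  have fgr: "NN A gr < \<infinity>" unfolding NGr using y0(3) by (simp add: ennreal_mult_less_top)
  have fch: "NN A (\<lambda>t. - ch n t) < \<infinity>" for n
  proof -
    obtain C where "\<And>x. \<bar>ch n x\<bar> \<le> C" using test_fun_bounded[OF cht] by blast
    then show ?thesis by (intro NN_bounded_fin[OF A Ab]) auto
  qed
  have fpch: "NN A (\<lambda>t. - pd 1 (ch n) t) < \<infinity>" for n
  proof -
    obtain C where "\<And>x. \<bar>pd 1 (ch n) x\<bar> \<le> C" using test_fun_pd_bounded[OF cht, of 1] by auto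
    then show ?thesis by (intro NN_bounded_fin[OF A Ab]) auto
  qed
  have F1: "NN A (\<lambda>t. r t - ch n t) < \<infinity>" for n
  proof -
    have "NN A (\<lambda>t. r t - ch n t) = NN A (\<lambda>t. r t + - ch n t)" by simp
    also have "\<dots> \<le> 2 * NN A r + 2 * NN A (\<lambda>t. - ch n t)" by (rule NN_add_le) measurable
    also have "\<dots> < \<infinity>" using Nr fch[of n] by (simp add: ennreal_mult_less_top)
    finally show ?thesis .
  qed
  have F2: "NN A (\<lambda>t. gr t - pd 1 (ch n) t) < \<infinity>" for n
  proof -
    have "NN A (\<lambda>t. gr t - pd 1 (ch n) t) = NN A (\<lambda>t. gr t + - pd 1 (ch n) t)" by simp
    also have "\<dots> \<le> 2 * NN A gr + 2 * NN A (\<lambda>t. - pd 1 (ch n) t)" by (rule NN_add_le) measurable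
    also have "\<dots> < \<infinity>" using fgr fpch[of n] by (simp add: ennreal_mult_less_top)
    finally show ?thesis .
  qed
  have R1: "(\<lambda>n. \<integral>x. (r x - ch n x)\<^sup>2 \<partial>lebesgue_on A) \<longlonglongrightarrow> 0"
    using NN_tendsto[of A "\<lambda>n t. r t - ch n t", OF A _ F1] L1 by simp
  have R2: "(\<lambda>n. \<integral>x. (gr x - pd 1 (ch n) x)\<^sup>2 \<partial>lebesgue_on A) \<longlonglongrightarrow> 0"
    using NN_tendsto[of A "\<lambda>n t. gr t - pd 1 (ch n) t", OF A _ F2] L2' by simp
  have L2r: "L2 A r" using NN_L2[OF A r] Nr by simp
  have L2g: "L2 A gr" using NN_L2[OF A mgr] fgr by simp
  have wk: "weak_pd A 1 r gr"
    by (rule weak_from_limit[OF A Ab _ ZI_real _ _ _ _ cht R1 R2]) (use L2r L2g in \<open>auto simp: L2_def\<close>)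
  show ?thesis unfolding H10_def
    apply (rule conjI[OF L2r])
    apply (rule exI[of _ "\<lambda>_. gr"])
    apply (rule conjI)
    subgoal using L2g wk by simp
    apply (rule exI[of _ ch])
    using cht R1 R2 by simp
qed

lemma AE_lebesgue_on_iff:
  fixes U :: "'a::euclidean_space set"
  assumes U: "U \<in> sets borel"
  shows "(AE x in lebesgue_on U. P x) \<longleftrightarrow> (AE x in lborel. x \<in> U \<longrightarrow> P x)"
proof -
  have "(AE x in lebesgue_on U. P x) \<longleftrightarrow> (AE x in lebesgue. x \<in> U \<longrightarrow> P x)"
    using U by (intro AE_restrict_space_iff) auto
  also have "\<dots> \<longleftrightarrow> (AE x in lborel. x \<in> U \<longrightarrow> P x)" by (rule AE_completion_iff)
  finally show ?thesis .
qed

lemma AE_fst_lborel: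
  assumes "AE x in lborel. P x"
  shows "AE z in (lborel :: (real \<times> real) measure). P (fst z)"
proof -
  from assms obtain N where N0: "{x \<in> space lborel. \<not> P x} \<subseteq> N" "emeasure lborel N = 0" "N \<in> sets lborel"
    by (rule AE_E)
  have N: "N \<in> null_sets lborel" "{x. \<not> P x} \<subseteq> N" using N0 by (auto simp: null_sets_def)
  have "N \<times> UNIV \<in> null_sets (lborel \<Otimes>\<^sub>M lborel)"
    using N(1) by (auto simp: null_sets_def lborel.emeasure_pair_measure_Times)
  then have "N \<times> UNIV \<in> null_sets (lborel :: (real \<times> real) measure)" by (simp add: lborel_prod)
  moreover have "{z. \<not> P (fst z)} \<subseteq> N \<times> UNIV" using N(2) by auto
  ultimately show ?thesis by (intro AE_I') auto
qed

lemma AE_snd_lborel: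
  assumes "AE x in lborel. P x"
  shows "AE z in (lborel :: (real \<times> real) measure). P (snd z)"
proof -
  from assms obtain N where N0: "{x \<in> space lborel. \<not> P x} \<subseteq> N" "emeasure lborel N = 0" "N \<in> sets lborel"
    by (rule AE_E)
  have N: "N \<in> null_sets lborel" "{x. \<not> P x} \<subseteq> N" using N0 by (auto simp: null_sets_def)
  have "UNIV \<times> N \<in> null_sets (lborel \<Otimes>\<^sub>M lborel)"
    using N(1) by (auto simp: null_sets_def lborel.emeasure_pair_measure_Times)
  then have "UNIV \<times> N \<in> null_sets (lborel :: (real \<times> real) measure)" by (simp add: lborel_prod)
  moreover have "{z. \<not> P (snd z)} \<subseteq> UNIV \<times> N" using N(2) by auto
  ultimately show ?thesis by (intro AE_I') auto
qed

lemma tensor_AE_zero: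
  assumes A: "A \<in> sets borel" and B: "B \<in> sets borel"
    and h: "(AE x in lborel. x \<in> A \<longrightarrow> r x = 0) \<or> (AE y in lborel. y \<in> B \<longrightarrow> s y = 0)"
  shows "AE z in lebesgue_on (A \<times> B). tensor r s z = 0"
  unfolding AE_lebesgue_on_iff[OF borel_Times[OF A B]]
  using h
proof
  assume "AE x in lborel. x \<in> A \<longrightarrow> r x = 0"
  from AE_fst_lborel[OF this] show "AE z in lborel. z \<in> A \<times> B \<longrightarrow> tensor r s z = 0"
    by eventually_elim (auto simp: tensor_def)
next
  assume "AE y in lborel. y \<in> B \<longrightarrow> s y = 0"
  from AE_snd_lborel[OF this] show "AE z in lborel. z \<in> A \<times> B \<longrightarrow> tensor r s z = 0"
    by eventually_elim (auto simp: tensor_def)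
qed

lemma tensor_AE_eq:
  assumes A: "A \<in> sets borel" and B: "B \<in> sets borel"
    and r: "AE x in lebesgue_on A. r x = r' x" and s: "AE y in lebesgue_on B. s y = s' y"
  shows "AE z in lebesgue_on (A \<times> B). tensor r s z = tensor r' s' z"
proof -
  have r1: "AE x in lborel. x \<in> A \<longrightarrow> r x = r' x" using r AE_lebesgue_on_iff[OF A] by simp
  have s1: "AE y in lborel. y \<in> B \<longrightarrow> s y = s' y" using s AE_lebesgue_on_iff[OF B] by simp
  show ?thesis unfolding AE_lebesgue_on_iff[OF borel_Times[OF A B]]
    using AE_fst_lborel[OF r1] AE_snd_lborel[OF s1] by eventually_elim (auto simp: tensor_def)
qed

lemma NN_zero_AE:
  fixes f :: "'a::euclidean_space \<Rightarrow> real"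
  assumes U[measurable]: "U \<in> sets borel" and f[measurable]: "f \<in> borel_measurable borel" and z: "NN U f = 0"
  shows "AE x in lborel. x \<in> U \<longrightarrow> f x = 0"
proof -
  have "AE x in lborel. ennreal ((f x)\<^sup>2) * indicator U x = 0"
    using z unfolding NN_def by (subst (asm) nn_integral_0_iff_AE) measurable
  then show ?thesis by eventually_elim (auto simp: indicator_def)
qed

lemma measurable_AE_lebesgue_on:
  fixes f g :: "'a::euclidean_space \<Rightarrow> real"
  assumes U: "U \<in> sets borel" and f: "f \<in> borel_measurable (lebesgue_on U)"
    and ae: "AE x in lebesgue_on U. f x = g x"
  shows "g \<in> borel_measurable (lebesgue_on U)"
proof -
  have f1: "(\<lambda>x. indicator U x *\<^sub>R f x) \<in> borel_measurable lebesgue"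
    using f U by (subst (asm) borel_measurable_restrict_space_iff) auto
  have "AE x in lebesgue. indicator U x *\<^sub>R f x = indicator U x *\<^sub>R g x"
    using ae U by (subst (asm) AE_restrict_space_iff) (auto elim!: AE_mp simp: indicator_def)
  then have "(\<lambda>x. indicator U x *\<^sub>R g x) \<in> borel_measurable lebesgue"
    by (rule borel_measurable_AE[OF f1])
  then show ?thesis using U by (subst borel_measurable_restrict_space_iff) auto
qed

lemma H10_AE:
  fixes u u' :: "'a::euclidean_space \<Rightarrow> real"
  assumes U: "U \<in> sets borel" and ae: "AE x in lebesgue_on U. u x = u' x" and H: "H10 U u"
  shows "H10 U u'"
proof -
  have mu: "u \<in> borel_measurable (lebesgue_on U)" using H unfolding H10_def L2_def by blast
  have mu': "u' \<in> borel_measurable (lebesgue_on U)" by (rule measurable_AE_lebesgue_on[OF U mu ae])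
  have iu: "integrable (lebesgue_on U) (\<lambda>x. (u x)\<^sup>2)" using H unfolding H10_def L2_def by blast
  have "integrable (lebesgue_on U) (\<lambda>x. (u' x)\<^sup>2)"
    by (rule integrable_cong_AE_imp[OF iu]) (use mu' ae in \<open>auto elim: AE_mp\<close>)
  then have L2': "L2 U u'" using mu' unfolding L2_def by blast
  from H obtain g \<phi> where g: "\<forall>b\<in>Basis. L2 U (g b) \<and> weak_pd U b u (g b)"
    and \<phi>: "\<forall>n. \<phi> n \<in> test_fun U" "(\<lambda>n. \<integral>x. (u x - \<phi> n x)\<^sup>2 \<partial>lebesgue_on U) \<longlonglongrightarrow> 0"
       "\<forall>b\<in>Basis. (\<lambda>n. \<integral>x. (g b x - pd b (\<phi> n) x)\<^sup>2 \<partial>lebesgue_on U) \<longlonglongrightarrow> 0"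
    unfolding H10_def by blast
  have wk: "weak_pd U b u' (g b)" if b: "b \<in> Basis" for b
    unfolding weak_pd_def
  proof (intro ballI conjI)
    fix \<psi> assume \<psi>: "\<psi> \<in> test_fun U"
    have w: "integrable (lebesgue_on U) (\<lambda>x. u x * pd b \<psi> x)"
      "integrable (lebesgue_on U) (\<lambda>x. g b x * \<psi> x)"
      "(\<integral>x. u x * pd b \<psi> x \<partial>lebesgue_on U) = - (\<integral>x. g b x * \<psi> x \<partial>lebesgue_on U)"
      using g b \<psi> unfolding weak_pd_def by auto
    have m: "(\<lambda>x. u' x * pd b \<psi> x) \<in> borel_measurable (lebesgue_on U)"
      using mu' borel_lebesgue_on[OF test_fun_pd_borel[OF \<psi> b]] by measurable
    have ae2: "AE x in lebesgue_on U. u x * pd b \<psi> x = u' x * pd b \<psi> x" using ae by (auto elim: AE_mp)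
    show "integrable (lebesgue_on U) (\<lambda>x. u' x * pd b \<psi> x)"
      by (rule integrable_cong_AE_imp[OF w(1) m ae2])
    show "integrable (lebesgue_on U) (\<lambda>x. g b x * \<psi> x)" by (rule w(2))
    have "(\<integral>x. u' x * pd b \<psi> x \<partial>lebesgue_on U) = (\<integral>x. u x * pd b \<psi> x \<partial>lebesgue_on U)"
      by (rule integral_cong_AE) (use m w(1) ae2 in \<open>auto elim: AE_mp\<close>)
    then show "(\<integral>x. u' x * pd b \<psi> x \<partial>lebesgue_on U) = - (\<integral>x. g b x * \<psi> x \<partial>lebesgue_on U)"
      using w(3) by simp
  qed
  have c: "(\<lambda>n. \<integral>x. (u' x - \<phi> n x)\<^sup>2 \<partial>lebesgue_on U) = (\<lambda>n. \<integral>x. (u x - \<phi> n x)\<^sup>2 \<partial>lebesgue_on U)"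
  proof
    fix n
    have m\<phi>: "\<phi> n \<in> borel_measurable (lebesgue_on U)" using borel_lebesgue_on[OF test_fun_borel] \<phi>(1) by blast
    show "(\<integral>x. (u' x - \<phi> n x)\<^sup>2 \<partial>lebesgue_on U) = (\<integral>x. (u x - \<phi> n x)\<^sup>2 \<partial>lebesgue_on U)"
      by (rule integral_cong_AE) (use mu mu' m\<phi> ae in \<open>auto elim: AE_mp\<close>)
  qed
  show ?thesis unfolding H10_def
    apply (rule conjI[OF L2'])
    apply (rule exI[of _ g])
    apply (rule conjI)
    subgoal using g wk by blast
    apply (rule exI[of _ \<phi>])
    using \<phi> c by simp
qed


lemma bm_prod_lborel: "(F :: real \<times> real \<Rightarrow> 'b::topological_space) \<in> borel_measurable borel \<Longrightarrow> F \<in> borel_measurable (lborel \<Otimes>\<^sub>M lborel)"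
  by (simp add: lborel_prod)

lemma ton_x:
  fixes F :: "real \<times> real \<Rightarrow> ennreal"
  assumes F[measurable]: "F \<in> borel_measurable borel" and A[measurable]: "A \<in> sets borel" and B[measurable]: "B \<in> sets borel"
  shows "(\<integral>\<^sup>+z. F z * indicator (A \<times> B) z \<partial>lborel) =
    (\<integral>\<^sup>+y. (\<integral>\<^sup>+t. F ((0,y) + t *\<^sub>R (1,0)) * indicator A t \<partial>lborel) * indicator B y \<partial>lborel)"
proof -
  have m: "(\<lambda>z. F z * indicator (A \<times> B) z) \<in> borel_measurable (lborel \<Otimes>\<^sub>M lborel)"
    by (rule bm_prod_lborel) (use borel_Times[OF A B] in measurable)
  have "(\<integral>\<^sup>+z. F z * indicator (A \<times> B) z \<partial>lborel) = (\<integral>\<^sup>+z. F z * indicator (A \<times> B) z \<partial>(lborel \<Otimes>\<^sub>M lborel))"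
    by (simp add: lborel_prod)
  also have "\<dots> = (\<integral>\<^sup>+y. (\<integral>\<^sup>+x. F (x, y) * indicator (A \<times> B) (x, y) \<partial>lborel) \<partial>lborel)"
    by (rule lborel_pair.nn_integral_snd[OF m, symmetric])
  also have "\<dots> = (\<integral>\<^sup>+y. (\<integral>\<^sup>+t. F ((0,y) + t *\<^sub>R (1,0)) * indicator A t \<partial>lborel) * indicator B y \<partial>lborel)"
  proof (intro nn_integral_cong)
    fix y :: real
    have "(\<integral>\<^sup>+x. F (x, y) * indicator (A \<times> B) (x, y) \<partial>lborel) = (\<integral>\<^sup>+x. (F (x, y) * indicator A x) * indicator B y \<partial>lborel)"
      by (intro nn_integral_cong) (simp add: indicator_times mult_ac)
    also have "\<dots> = (\<integral>\<^sup>+x. F (x, y) * indicator A x \<partial>lborel) * indicator B y"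
      by (rule nn_integral_multc) measurable
    finally show "(\<integral>\<^sup>+x. F (x, y) * indicator (A \<times> B) (x, y) \<partial>lborel) =
        (\<integral>\<^sup>+t. F ((0,y) + t *\<^sub>R (1,0)) * indicator A t \<partial>lborel) * indicator B y" by simp
  qed
  finally show ?thesis .
qed

lemma tmeas_x:
  fixes F :: "real \<times> real \<Rightarrow> ennreal"
  assumes F[measurable]: "F \<in> borel_measurable borel" and A[measurable]: "A \<in> sets borel"
  shows "(\<lambda>y. \<integral>\<^sup>+t. F ((0,y) + t *\<^sub>R (1,0)) * indicator A t \<partial>lborel) \<in> borel_measurable borel"
proof -
  have m: "(\<lambda>(y, t). F (t, y) * indicator A t) \<in> borel_measurable (lborel \<Otimes>\<^sub>M lborel)"
  proof -
    have F'[measurable]: "F \<in> borel_measurable (lborel \<Otimes>\<^sub>M lborel)" by (rule bm_prod_lborel[OF F])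
    show ?thesis by measurable
  qed
  have "(\<lambda>y. \<integral>\<^sup>+t. F (t, y) * indicator A t \<partial>lborel) \<in> borel_measurable lborel"
    using lborel.borel_measurable_nn_integral[OF m] .
  then show ?thesis by simp
qed

lemma ton_y:
  fixes F :: "real \<times> real \<Rightarrow> ennreal"
  assumes F[measurable]: "F \<in> borel_measurable borel" and A[measurable]: "A \<in> sets borel" and B[measurable]: "B \<in> sets borel"
  shows "(\<integral>\<^sup>+z. F z * indicator (A \<times> B) z \<partial>lborel) =
    (\<integral>\<^sup>+x. (\<integral>\<^sup>+t. F ((x,0) + t *\<^sub>R (0,1)) * indicator B t \<partial>lborel) * indicator A x \<partial>lborel)"
proof -
  have m: "(\<lambda>z. F z * indicator (A \<times> B) z) \<in> borel_measurable (lborel \<Otimes>\<^sub>M lborel)"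
    by (rule bm_prod_lborel) (use borel_Times[OF A B] in measurable)
  have "(\<integral>\<^sup>+z. F z * indicator (A \<times> B) z \<partial>lborel) = (\<integral>\<^sup>+z. F z * indicator (A \<times> B) z \<partial>(lborel \<Otimes>\<^sub>M lborel))"
    by (simp add: lborel_prod)
  also have "\<dots> = (\<integral>\<^sup>+x. (\<integral>\<^sup>+y. F (x, y) * indicator (A \<times> B) (x, y) \<partial>lborel) \<partial>lborel)"
    by (rule lborel.nn_integral_fst[OF m, symmetric])
  also have "\<dots> = (\<integral>\<^sup>+x. (\<integral>\<^sup>+t. F ((x,0) + t *\<^sub>R (0,1)) * indicator B t \<partial>lborel) * indicator A x \<partial>lborel)"
  proof (intro nn_integral_cong)
    fix x :: real
    have "(\<integral>\<^sup>+y. F (x, y) * indicator (A \<times> B) (x, y) \<partial>lborel) = (\<integral>\<^sup>+y. (F (x, y) * indicator B y) * indicator A x \<partial>lborel)"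
      by (intro nn_integral_cong) (simp add: indicator_times mult_ac)
    also have "\<dots> = (\<integral>\<^sup>+y. F (x, y) * indicator B y \<partial>lborel) * indicator A x"
      by (rule nn_integral_multc) measurable
    finally show "(\<integral>\<^sup>+y. F (x, y) * indicator (A \<times> B) (x, y) \<partial>lborel) =
        (\<integral>\<^sup>+t. F ((x,0) + t *\<^sub>R (0,1)) * indicator B t \<partial>lborel) * indicator A x" by simp
  qed
  finally show ?thesis .
qed

lemma tmeas_y:
  fixes F :: "real \<times> real \<Rightarrow> ennreal"
  assumes F[measurable]: "F \<in> borel_measurable borel" and B[measurable]: "B \<in> sets borel"
  shows "(\<lambda>x. \<integral>\<^sup>+t. F ((x,0) + t *\<^sub>R (0,1)) * indicator B t \<partial>lborel) \<in> borel_measurable borel"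
proof -
  have m: "(\<lambda>(x, t). F (x, t) * indicator B t) \<in> borel_measurable (lborel \<Otimes>\<^sub>M lborel)"
  proof -
    have F'[measurable]: "F \<in> borel_measurable (lborel \<Otimes>\<^sub>M lborel)" by (rule bm_prod_lborel[OF F])
    show ?thesis by measurable
  qed
  have "(\<lambda>x. \<integral>\<^sup>+t. F (x, t) * indicator B t \<partial>lborel) \<in> borel_measurable lborel"
    using lborel.borel_measurable_nn_integral[OF m] .
  then show ?thesis by simp
qed

lemma NN_commute: "NN U (\<lambda>x. f x - h x) = NN U (\<lambda>x. h x - f x)"
  unfolding NN_def by (simp add: power2_commute)

lemma fin_diff:
  fixes f h :: "'a::euclidean_space \<Rightarrow> real"
  assumes U[measurable]: "U \<in> sets borel" "bounded U" and f[measurable]: "f \<in> borel_measurable borel"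
    and Nf: "NN U f < \<infinity>" and h[measurable]: "h \<in> borel_measurable borel" and C: "\<exists>C. \<forall>x. \<bar>h x\<bar> \<le> C"
  shows "NN U (\<lambda>x. f x - h x) < \<infinity>"
proof -
  obtain C where C: "\<And>x. \<bar>h x\<bar> \<le> C" using C by blast
  have "NN U (\<lambda>x. f x - h x) = NN U (\<lambda>x. f x + - h x)" by simp
  also have "\<dots> \<le> 2 * NN U f + 2 * NN U (\<lambda>x. - h x)" by (rule NN_add_le) measurable
  also have "\<dots> < \<infinity>" using Nf NN_bounded_fin[OF U, of "\<lambda>x. - h x" C] C by (simp add: ennreal_mult_less_top)
  finally show ?thesis .
qed

lemma conv_NN:
  fixes f :: "'a::euclidean_space \<Rightarrow> real" and h :: "nat \<Rightarrow> 'a \<Rightarrow> real"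
  assumes U[measurable]: "U \<in> sets borel" "bounded U" and f[measurable]: "f \<in> borel_measurable borel"
    and Nf: "NN U f < \<infinity>" and h[measurable]: "\<And>n. h n \<in> borel_measurable borel" and C: "\<And>n. \<exists>C. \<forall>x. \<bar>h n x\<bar> \<le> C"
  shows "(\<lambda>n. \<integral>x. (f x - h n x)\<^sup>2 \<partial>lebesgue_on U) \<longlonglongrightarrow> 0 \<longleftrightarrow> (\<lambda>n. NN U (\<lambda>x. f x - h n x)) \<longlonglongrightarrow> 0"
  by (rule NN_tendsto[OF U(1)]) (use fin_diff[OF U f Nf h C] in auto)

lemma tf_bdd: "\<phi> \<in> test_fun U \<Longrightarrow> \<exists>C. \<forall>x. \<bar>\<phi> x\<bar> \<le> C"
  by (rule test_fun_bounded)

lemma tf_pd_bdd: "\<phi> \<in> test_fun U \<Longrightarrow> b \<in> Basis \<Longrightarrow> \<exists>C. \<forall>x. \<bar>pd b \<phi> x\<bar> \<le> C"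
  by (rule test_fun_pd_bounded)


lemma borel_grad:
  fixes U :: "'a::euclidean_space set" and g :: "'a \<Rightarrow> real" and \<Phi> :: "nat \<Rightarrow> 'a \<Rightarrow> real"
  assumes U[measurable]: "U \<in> sets borel" "bounded U" and L: "L2 U g" and b: "b \<in> Basis"
    and \<Phi>: "\<And>n. \<Phi> n \<in> test_fun U"
    and c: "(\<lambda>n. \<integral>x. (g x - pd b (\<Phi> n) x)\<^sup>2 \<partial>lebesgue_on U) \<longlonglongrightarrow> 0"
  shows "\<exists>G. G \<in> borel_measurable borel \<and> NN U G < \<infinity> \<and> (AE x in lebesgue_on U. g x = G x) \<and>
     (\<lambda>n. NN U (\<lambda>x. G x - pd b (\<Phi> n) x)) \<longlonglongrightarrow> 0"
proof -
  have mg: "g \<in> borel_measurable (lebesgue_on U)" and ig: "integrable (lebesgue_on U) (\<lambda>x. (g x)\<^sup>2)"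
    using L unfolding L2_def by auto
  obtain G where G[measurable]: "G \<in> borel_measurable borel" and ae: "AE x in lebesgue_on U. g x = G x"
    using borel_version[OF U(1) mg] by blast
  have mG: "G \<in> borel_measurable (lebesgue_on U)" by (rule borel_lebesgue_on[OF G])
  have "integrable (lebesgue_on U) (\<lambda>x. (G x)\<^sup>2)"
    by (rule integrable_cong_AE_imp[OF ig]) (use mG ae in \<open>auto elim: AE_mp\<close>)
  then have NG: "NN U G < \<infinity>" using NN_integrable[OF U(1) G] by simp
  have mp: "pd b (\<Phi> n) \<in> borel_measurable (lebesgue_on U)" for n
    by (rule borel_lebesgue_on[OF test_fun_pd_borel[OF \<Phi> b]])
  have eq: "(\<lambda>n. \<integral>x. (g x - pd b (\<Phi> n) x)\<^sup>2 \<partial>lebesgue_on U) = (\<lambda>n. \<integral>x. (G x - pd b (\<Phi> n) x)\<^sup>2 \<partial>lebesgue_on U)"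
  proof
    fix n
    show "(\<integral>x. (g x - pd b (\<Phi> n) x)\<^sup>2 \<partial>lebesgue_on U) = (\<integral>x. (G x - pd b (\<Phi> n) x)\<^sup>2 \<partial>lebesgue_on U)"
      by (rule integral_cong_AE) (use mg mG mp[of n] ae in \<open>auto elim: AE_mp\<close>)
  qed
  have "(\<lambda>n. NN U (\<lambda>x. G x - pd b (\<Phi> n) x)) \<longlonglongrightarrow> 0"
    using conv_NN[OF U G NG test_fun_pd_borel[OF \<Phi> b] tf_pd_bdd[OF \<Phi> b]] c eq by simp
  then show ?thesis using G NG ae by blast
qed

lemma forward:
  fixes A B :: "real set" and r s :: "real \<Rightarrow> real"
  assumes A[measurable]: "A \<in> sets borel" and Ab: "bounded A" and B[measurable]: "B \<in> sets borel" and Bb: "bounded B"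
    and r[measurable]: "r \<in> borel_measurable borel" and s[measurable]: "s \<in> borel_measurable borel"
    and nzr: "\<not> (AE x in lborel. x \<in> A \<longrightarrow> r x = 0)" and nzs: "\<not> (AE y in lborel. y \<in> B \<longrightarrow> s y = 0)"
    and H: "H10 (A \<times> B) (tensor r s)"
  shows "H10 A r \<and> H10 B s"
proof -
  let ?\<Omega> = "A \<times> B" and ?u = "tensor r s"
  have \<Omega>[measurable]: "?\<Omega> \<in> sets borel" by (rule borel_Times[OF A B])
  have \<Omega>b: "bounded ?\<Omega>" using Ab Bb by (rule bounded_Times)
  have mu[measurable]: "?u \<in> borel_measurable borel" by (rule bm_tensor[OF r s])
  from H obtain g \<Phi> where L2u: "L2 ?\<Omega> ?u" and gp: "\<forall>b\<in>Basis. L2 ?\<Omega> (g b) \<and> weak_pd ?\<Omega> b ?u (g b)"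
    and \<Phi>: "\<And>n. \<Phi> n \<in> test_fun ?\<Omega>" and c1: "(\<lambda>n. \<integral>x. (?u x - \<Phi> n x)\<^sup>2 \<partial>lebesgue_on ?\<Omega>) \<longlonglongrightarrow> 0"
    and c2: "\<forall>b\<in>Basis. (\<lambda>n. \<integral>x. (g b x - pd b (\<Phi> n) x)\<^sup>2 \<partial>lebesgue_on ?\<Omega>) \<longlonglongrightarrow> 0"
    unfolding H10_def by blast
  have Nu: "NN ?\<Omega> ?u < \<infinity>" using NN_L2[OF \<Omega> mu] L2u by simp
  have NA0: "NN A r \<noteq> 0" using NN_zero_AE[OF A r] nzr by blast
  have NB0: "NN B s \<noteq> 0" using NN_zero_AE[OF B s] nzs by blast
  have prod: "NN ?\<Omega> ?u = NN A r * NN B s" by (rule NN_tensor) measurable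
  have NA: "NN A r < \<infinity>" and NB: "NN B s < \<infinity>"
    using Nu NA0 NB0 unfolding prod by (auto simp: ennreal_mult_less_top top.not_eq_extremum)
  have l1: "(\<lambda>n. NN ?\<Omega> (\<lambda>z. ?u z - \<Phi> n z)) \<longlonglongrightarrow> 0"
    using conv_NN[OF \<Omega> \<Omega>b mu Nu test_fun_borel[OF \<Phi>] tf_bdd[OF \<Phi>]] c1 by simp
  have b1: "(1::real,0::real) \<in> Basis" and b2: "(0::real,1::real) \<in> Basis" by (simp_all add: Basis_real_prod)
  have Lg1: "L2 ?\<Omega> (g (1,0))" using gp b1 by blast
  have cg1: "(\<lambda>n. \<integral>x. (g (1,0) x - pd (1,0) (\<Phi> n) x)\<^sup>2 \<partial>lebesgue_on ?\<Omega>) \<longlonglongrightarrow> 0" using c2 b1 by blast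
  from borel_grad[OF \<Omega> \<Omega>b Lg1 b1 \<Phi> cg1]
  obtain G1 where G1[measurable]: "G1 \<in> borel_measurable borel" and NG1: "NN ?\<Omega> G1 < \<infinity>"
    and l21: "(\<lambda>n. NN ?\<Omega> (\<lambda>z. G1 z - pd (1,0) (\<Phi> n) z)) \<longlonglongrightarrow> 0"
    by (elim exE conjE)
  have Lg2: "L2 ?\<Omega> (g (0,1))" using gp b2 by blast
  have cg2: "(\<lambda>n. \<integral>x. (g (0,1) x - pd (0,1) (\<Phi> n) x)\<^sup>2 \<partial>lebesgue_on ?\<Omega>) \<longlonglongrightarrow> 0" using c2 b2 by blast
  from borel_grad[OF \<Omega> \<Omega>b Lg2 b2 \<Phi> cg2]
  obtain G2 where G2[measurable]: "G2 \<in> borel_measurable borel" and NG2: "NN ?\<Omega> G2 < \<infinity>"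
    and l22: "(\<lambda>n. NN ?\<Omega> (\<lambda>z. G2 z - pd (0,1) (\<Phi> n) z)) \<longlonglongrightarrow> 0"
    by (elim exE conjE)
  have HA: "H10 A r"
  proof (rule slice_core[where p="\<lambda>y. (0,y)" and d="(1,0)" and \<Omega>="?\<Omega>" and B=B and s=s and u="?u" and G=G1 and \<Phi>=\<Phi>])
    show "\<And>F::real\<times>real\<Rightarrow>ennreal. F \<in> borel_measurable borel \<Longrightarrow> (\<integral>\<^sup>+z. F z * indicator ?\<Omega> z \<partial>lborel)
         = (\<integral>\<^sup>+y. (\<integral>\<^sup>+t. F ((0,y) + t *\<^sub>R (1,0)) * indicator A t \<partial>lborel) * indicator B y \<partial>lborel)"
      by (rule ton_x) auto
    show "\<And>F::real\<times>real\<Rightarrow>ennreal. F \<in> borel_measurable borel \<Longrightarrow>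
         (\<lambda>y. \<integral>\<^sup>+t. F ((0,y) + t *\<^sub>R (1,0)) * indicator A t \<partial>lborel) \<in> borel_measurable borel"
      by (rule tmeas_x) auto
    show "\<And>y t. (0, y) + t *\<^sub>R (1, 0) \<in> ?\<Omega> \<Longrightarrow> t \<in> A" by simp
    show "\<And>y t. ?u ((0, y) + t *\<^sub>R (1, 0)) = r t * s y" by (simp add: tensor_def)
  qed (fact b1 A Ab B \<Omega> r s mu G1 NA NG1 \<Phi> l1 l21 nzs)+
  have HB: "H10 B s"
  proof (rule slice_core[where p="\<lambda>x. (x,0)" and d="(0,1)" and \<Omega>="?\<Omega>" and B=A and s=r and u="?u" and G=G2 and \<Phi>=\<Phi>])
    show "\<And>F::real\<times>real\<Rightarrow>ennreal. F \<in> borel_measurable borel \<Longrightarrow> (\<integral>\<^sup>+z. F z * indicator ?\<Omega> z \<partial>lborel)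
         = (\<integral>\<^sup>+x. (\<integral>\<^sup>+t. F ((x,0) + t *\<^sub>R (0,1)) * indicator B t \<partial>lborel) * indicator A x \<partial>lborel)"
      by (rule ton_y) auto
    show "\<And>F::real\<times>real\<Rightarrow>ennreal. F \<in> borel_measurable borel \<Longrightarrow>
         (\<lambda>x. \<integral>\<^sup>+t. F ((x,0) + t *\<^sub>R (0,1)) * indicator B t \<partial>lborel) \<in> borel_measurable borel"
      by (rule tmeas_y) auto
    show "\<And>x t. (x, 0) + t *\<^sub>R (0, 1) \<in> ?\<Omega> \<Longrightarrow> t \<in> B" by simp
    show "\<And>x t. ?u ((x, 0) + t *\<^sub>R (0, 1)) = s t * r x" by (simp add: tensor_def)
  qed (fact b2 A Bb B \<Omega> r s mu G2 NB NG2 \<Phi> l1 l22 nzr)+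
  show ?thesis using HA HB by blast
qed


lemma unpack_H10_1:
  fixes A :: "real set" and r :: "real \<Rightarrow> real"
  assumes A[measurable]: "A \<in> sets borel" and Ab: "bounded A" and r[measurable]: "r \<in> borel_measurable borel"
    and H: "H10 A r"
  obtains gr ch where "gr \<in> borel_measurable borel" "NN A gr < \<infinity>" "NN A r < \<infinity>"
    "\<And>n. ch n \<in> test_fun A"
    "(\<lambda>n. NN A (\<lambda>x. ch n x - r x)) \<longlonglongrightarrow> 0"
    "(\<lambda>n. NN A (\<lambda>x. pd 1 (ch n) x - gr x)) \<longlonglongrightarrow> 0"
proof -
  from H obtain g ch where L2r: "L2 A r" and gp: "\<forall>b\<in>Basis. L2 A (g b) \<and> weak_pd A b r (g b)"
    and ch: "\<And>n. ch n \<in> test_fun A" and c1: "(\<lambda>n. \<integral>x. (r x - ch n x)\<^sup>2 \<partial>lebesgue_on A) \<longlonglongrightarrow> 0"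
    and c2: "\<forall>b\<in>Basis. (\<lambda>n. \<integral>x. (g b x - pd b (ch n) x)\<^sup>2 \<partial>lebesgue_on A) \<longlonglongrightarrow> 0"
    unfolding H10_def by blast
  have b1: "(1::real) \<in> Basis" by simp
  have Lg: "L2 A (g 1)" using gp by simp
  have cg: "(\<lambda>n. \<integral>x. (g 1 x - pd 1 (ch n) x)\<^sup>2 \<partial>lebesgue_on A) \<longlonglongrightarrow> 0" using c2 by simp
  from borel_grad[OF A Ab Lg b1 ch cg]
  obtain G where G[measurable]: "G \<in> borel_measurable borel" and NG: "NN A G < \<infinity>"
    and lG: "(\<lambda>n. NN A (\<lambda>x. G x - pd 1 (ch n) x)) \<longlonglongrightarrow> 0"
    by (elim exE conjE)
  have NA: "NN A r < \<infinity>" using NN_L2[OF A r] L2r by simp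
  have lr: "(\<lambda>n. NN A (\<lambda>x. r x - ch n x)) \<longlonglongrightarrow> 0"
    using conv_NN[OF A Ab r NA test_fun_borel[OF ch] tf_bdd[OF ch]] c1 by simp
  show ?thesis
    by (rule that[OF G NG NA ch]) (use lr lG in \<open>simp_all add: NN_commute\<close>)
qed

lemma backward:
  fixes A B :: "real set" and r s :: "real \<Rightarrow> real"
  assumes A[measurable]: "A \<in> sets borel" and Ab: "bounded A" and B[measurable]: "B \<in> sets borel" and Bb: "bounded B"
    and r[measurable]: "r \<in> borel_measurable borel" and s[measurable]: "s \<in> borel_measurable borel"
    and HA: "H10 A r" and HB: "H10 B s"
  shows "H10 (A \<times> B) (tensor r s)"
proof -
  let ?\<Omega> = "A \<times> B" and ?u = "tensor r s"
  have \<Omega>[measurable]: "?\<Omega> \<in> sets borel" by (rule borel_Times[OF A B])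
  have \<Omega>b: "bounded ?\<Omega>" using Ab Bb by (rule bounded_Times)
  have mu[measurable]: "?u \<in> borel_measurable borel" by (rule bm_tensor[OF r s])
  obtain gr ch where gr[measurable]: "gr \<in> borel_measurable borel" and Ngr: "NN A gr < \<infinity>" and NA: "NN A r < \<infinity>"
    and ch: "\<And>n. ch n \<in> test_fun A" and lr: "(\<lambda>n. NN A (\<lambda>x. ch n x - r x)) \<longlonglongrightarrow> 0"
    and lgr: "(\<lambda>n. NN A (\<lambda>x. pd 1 (ch n) x - gr x)) \<longlonglongrightarrow> 0"
    by (rule unpack_H10_1[OF A Ab r HA]) blast
  obtain gs om where gs[measurable]: "gs \<in> borel_measurable borel" and Ngs: "NN B gs < \<infinity>" and NB: "NN B s < \<infinity>"
    and om: "\<And>n. om n \<in> test_fun B" and ls: "(\<lambda>n. NN B (\<lambda>x. om n x - s x)) \<longlonglongrightarrow> 0"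
    and lgs: "(\<lambda>n. NN B (\<lambda>x. pd 1 (om n) x - gs x)) \<longlonglongrightarrow> 0"
    by (rule unpack_H10_1[OF B Bb s HB]) blast
  have mch[measurable]: "ch n \<in> borel_measurable borel" for n using test_fun_borel[OF ch] .
  have mom[measurable]: "om n \<in> borel_measurable borel" for n using test_fun_borel[OF om] .
  have mpch[measurable]: "pd 1 (ch n) \<in> borel_measurable borel" for n using test_fun_pd_borel[OF ch, of 1] by simp
  have mpom[measurable]: "pd 1 (om n) \<in> borel_measurable borel" for n using test_fun_pd_borel[OF om, of 1] by simp
  define \<Phi> where "\<Phi> n = tensor (ch n) (om n)" for n
  have \<Phi>: "\<Phi> n \<in> test_fun ?\<Omega>" for n unfolding \<Phi>_def by (rule tensor_test_fun[OF ch om])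
  have pd\<Phi>1: "pd (1,0) (\<Phi> n) = tensor (pd 1 (ch n)) (om n)" for n
    unfolding \<Phi>_def by (rule pd_tensor(1)[OF test_fun_props(1)[OF ch] test_fun_props(1)[OF om]])
  have pd\<Phi>2: "pd (0,1) (\<Phi> n) = tensor (ch n) (pd 1 (om n))" for n
    unfolding \<Phi>_def by (rule pd_tensor(2)[OF test_fun_props(1)[OF ch] test_fun_props(1)[OF om]])
  define G where "G b = (if b = (1::real, 0::real) then tensor gr s else tensor r gs)" for b
  have T1: "(\<lambda>n. NN ?\<Omega> (\<lambda>z. tensor (ch n) (om n) z - tensor r s z)) \<longlonglongrightarrow> 0"
    by (rule NN_tensor_conv[OF A B r s _ _ NA NB lr ls]) measurable
  have T2: "(\<lambda>n. NN ?\<Omega> (\<lambda>z. tensor (pd 1 (ch n)) (om n) z - tensor gr s z)) \<longlonglongrightarrow> 0"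
    by (rule NN_tensor_conv[OF A B gr s _ _ Ngr NB lgr ls]) measurable
  have T3: "(\<lambda>n. NN ?\<Omega> (\<lambda>z. tensor (ch n) (pd 1 (om n)) z - tensor r gs z)) \<longlonglongrightarrow> 0"
    by (rule NN_tensor_conv[OF A B r gs _ _ NA Ngs lr lgs]) measurable
  have "NN ?\<Omega> ?u = NN A r * NN B s" by (rule NN_tensor) measurable
  then have Nu: "NN ?\<Omega> ?u < \<infinity>" using NA NB by (simp add: ennreal_mult_less_top)
  have cu: "(\<lambda>n. \<integral>x. (?u x - \<Phi> n x)\<^sup>2 \<partial>lebesgue_on ?\<Omega>) \<longlonglongrightarrow> 0"
    using conv_NN[OF \<Omega> \<Omega>b mu Nu test_fun_borel[OF \<Phi>] tf_bdd[OF \<Phi>]] T1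
    by (simp add: \<Phi>_def NN_commute[of _ ?u])
  have L2u: "L2 ?\<Omega> ?u" using NN_L2[OF \<Omega> mu] Nu by simp
  have Gb: "L2 ?\<Omega> (G b) \<and> (\<lambda>n. \<integral>x. (G b x - pd b (\<Phi> n) x)\<^sup>2 \<partial>lebesgue_on ?\<Omega>) \<longlonglongrightarrow> 0" if b: "b \<in> Basis" for b
  proof -
    have "b = (1,0) \<or> b = (0,1)" using b Basis_real_prod by auto
    then show ?thesis
    proof
      assume b1: "b = (1,0)"
      have mG[measurable]: "G b \<in> borel_measurable borel" unfolding G_def b1 by (simp add: bm_tensor)
      have "NN ?\<Omega> (tensor gr s) = NN A gr * NN B s" by (rule NN_tensor) measurable
      then have NG: "NN ?\<Omega> (G b) < \<infinity>" unfolding G_def b1 using Ngr NB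
        by (simp add: ennreal_mult_less_top)
      have "(\<lambda>n. NN ?\<Omega> (\<lambda>x. G b x - pd b (\<Phi> n) x)) \<longlonglongrightarrow> 0"
        unfolding b1 pd\<Phi>1 using T2 by (simp add: G_def NN_commute[of _ "tensor gr s"])
      then have "(\<lambda>n. \<integral>x. (G b x - pd b (\<Phi> n) x)\<^sup>2 \<partial>lebesgue_on ?\<Omega>) \<longlonglongrightarrow> 0"
        using conv_NN[OF \<Omega> \<Omega>b mG NG test_fun_pd_borel[OF \<Phi> b] tf_pd_bdd[OF \<Phi> b]] by simp
      moreover have "L2 ?\<Omega> (G b)" using NN_L2[OF \<Omega> mG] NG by simp
      ultimately show ?thesis by simp
    next
      assume b2: "b = (0,1)"
      have mG[measurable]: "G b \<in> borel_measurable borel" unfolding G_def b2 by (simp add: bm_tensor)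
      have "NN ?\<Omega> (tensor r gs) = NN A r * NN B gs" by (rule NN_tensor) measurable
      then have NG: "NN ?\<Omega> (G b) < \<infinity>" unfolding G_def b2 using NA Ngs
        by (simp add: ennreal_mult_less_top)
      have "(\<lambda>n. NN ?\<Omega> (\<lambda>x. G b x - pd b (\<Phi> n) x)) \<longlonglongrightarrow> 0"
        unfolding b2 pd\<Phi>2 using T3 by (simp add: G_def NN_commute[of _ "tensor r gs"])
      then have "(\<lambda>n. \<integral>x. (G b x - pd b (\<Phi> n) x)\<^sup>2 \<partial>lebesgue_on ?\<Omega>) \<longlonglongrightarrow> 0"
        using conv_NN[OF \<Omega> \<Omega>b mG NG test_fun_pd_borel[OF \<Phi> b] tf_pd_bdd[OF \<Phi> b]] by simp
      moreover have "L2 ?\<Omega> (G b)" using NN_L2[OF \<Omega> mG] NG by simp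
      ultimately show ?thesis by simp
    qed
  qed
  have wk: "weak_pd ?\<Omega> b ?u (G b)" if b: "b \<in> Basis" for b
  proof -
    have "L2 ?\<Omega> (G b)" and cG: "(\<lambda>n. \<integral>x. (G b x - pd b (\<Phi> n) x)\<^sup>2 \<partial>lebesgue_on ?\<Omega>) \<longlonglongrightarrow> 0"
      using Gb[OF b] by auto
    then show ?thesis
      using weak_from_limit[OF \<Omega> \<Omega>b b ZI_prod[OF b] _ _ _ _ \<Phi> cu cG] L2u unfolding L2_def by blast
  qed
  show ?thesis unfolding H10_def
    apply (rule conjI[OF L2u])
    apply (rule exI[of _ G])
    apply (rule conjI)
    subgoal using Gb wk by blast
    apply (rule exI[of _ \<Phi>])
    using \<Phi> cu Gb by blast
qed


lemma H10_AE_iff: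
  fixes u u' :: "'a::euclidean_space \<Rightarrow> real"
  assumes U: "U \<in> sets borel" and ae: "AE x in lebesgue_on U. u x = u' x"
  shows "H10 U u \<longleftrightarrow> H10 U u'"
proof
  assume "H10 U u" then show "H10 U u'" by (rule H10_AE[OF U ae])
next
  have ae': "AE x in lebesgue_on U. u' x = u x" using ae by (auto elim: AE_mp)
  assume "H10 U u'" then show "H10 U u" by (rule H10_AE[OF U ae'])
qed

theorem lemma1:
  fixes \<Omega>x \<Omega>y :: "real set" and r s :: "real \<Rightarrow> real"
  assumes "bounded_domain \<Omega>x" and "bounded_domain \<Omega>y"
    and "r \<in> borel_measurable (lebesgue_on \<Omega>x)"
    and "s \<in> borel_measurable (lebesgue_on \<Omega>y)"
    and "\<not> (AE z in lebesgue_on (\<Omega>x \<times> \<Omega>y). tensor r s z = 0)"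
  shows "H10 (\<Omega>x \<times> \<Omega>y) (tensor r s) \<longleftrightarrow> H10 \<Omega>x r \<and> H10 \<Omega>y s"
proof -
  have A: "\<Omega>x \<in> sets borel" and Ab: "bounded \<Omega>x" using assms(1) unfolding bounded_domain_def by auto
  have B: "\<Omega>y \<in> sets borel" and Bb: "bounded \<Omega>y" using assms(2) unfolding bounded_domain_def by auto
  obtain r' where r': "r' \<in> borel_measurable borel" and aer: "AE x in lebesgue_on \<Omega>x. r x = r' x"
    using borel_version[OF A assms(3)] by blast
  obtain s' where s': "s' \<in> borel_measurable borel" and aes: "AE y in lebesgue_on \<Omega>y. s y = s' y"
    using borel_version[OF B assms(4)] by blast
  have aeT: "AE z in lebesgue_on (\<Omega>x \<times> \<Omega>y). tensor r s z = tensor r' s' z"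
    by (rule tensor_AE_eq[OF A B aer aes])
  have nz': "\<not> (AE z in lebesgue_on (\<Omega>x \<times> \<Omega>y). tensor r' s' z = 0)"
  proof
    assume "AE z in lebesgue_on (\<Omega>x \<times> \<Omega>y). tensor r' s' z = 0"
    with aeT have "AE z in lebesgue_on (\<Omega>x \<times> \<Omega>y). tensor r s z = 0" by eventually_elim simp
    with assms(5) show False by simp
  qed
  have nzr: "\<not> (AE x in lborel. x \<in> \<Omega>x \<longrightarrow> r' x = 0)"
    using tensor_AE_zero[OF A B, of r' s'] nz' by blast
  have nzs: "\<not> (AE y in lborel. y \<in> \<Omega>y \<longrightarrow> s' y = 0)"
    using tensor_AE_zero[OF A B, of r' s'] nz' by blast
  have e1: "H10 (\<Omega>x \<times> \<Omega>y) (tensor r s) \<longleftrightarrow> H10 (\<Omega>x \<times> \<Omega>y) (tensor r' s')"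
    by (rule H10_AE_iff[OF borel_Times[OF A B] aeT])
  have e2: "H10 \<Omega>x r \<longleftrightarrow> H10 \<Omega>x r'" by (rule H10_AE_iff[OF A aer])
  have e3: "H10 \<Omega>y s \<longleftrightarrow> H10 \<Omega>y s'" by (rule H10_AE_iff[OF B aes])
  have "H10 (\<Omega>x \<times> \<Omega>y) (tensor r' s') \<longleftrightarrow> H10 \<Omega>x r' \<and> H10 \<Omega>y s'"
    using forward[OF A Ab B Bb r' s' nzr nzs] backward[OF A Ab B Bb r' s'] by blast
  then show ?thesis using e1 e2 e3 by simp
qed

end
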